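(* Let $p$ be a prime, $M\ge 2$ an integer, and let $A\subseteq\mathrm{SL}_2(\mathbb{F}_p)$, $B$ and $w_M$ be as described in the context. If $w_M > 3/4$, then \[ |ABA|,~ |A^{-1}BA^{-1}| \gg p^3 \,. \]
   Context: Let $Q=p-1$ and let $F_M(Q)$ be the set of rationals $u/v\in[0,1]$ with $(u,v)=1$, $v\le Q$, whose continued fraction $[0;b_1,\dots,b_s]$ has all partial quotients $b_j\le M$; let $w_M$ be the Hausdorff dimension of the set of irrationals in $[0,1]$ with all partial quotients $\le M$. Each $p_s/q_s=[0;b_1,\dots,b_s]$ corresponds to the matrix $\begin{pmatrix}0&1\\1&b_1\end{pmatrix}\cdots\begin{pmatrix}0&1\\1&b_s\end{pmatrix}=\begin{pmatrix}p_{s-1}&p_s\\ q_{s-1}&q_s\end{pmatrix}$. Let $A\subseteq \mathrm{SL}_2(\mathbb{F}_p)$ be the set of reductions mod $p$ of such matrices coming from elements of $F_M(Q)$ with $s$ even (so $|A|\asymp_M p^{2w_M}$), and let $B$ be the standard Borel subgroup of upper-triangular matrices of $\mathrm{SL}_2(\mathbb{F}_p)$. *)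

theory Defs
  imports "HOL-Analysis.Analysis" "HOL-Computational_Algebra.Primes"
begin

definition hd_term :: "real \<Rightarrow> real set \<Rightarrow> real" where
  "hd_term s U = (if U = {} then 0 else if s = 0 then 1 else diameter U powr s)"

definition hausdorff_pre :: "real \<Rightarrow> real \<Rightarrow> real set \<Rightarrow> ennreal" where
  "hausdorff_pre s \<delta> E =
     (INF f \<in> {f :: nat \<Rightarrow> real set. E \<subseteq> (\<Union>i. f i) \<and>
                 (\<forall>i. bounded (f i) \<and> diameter (f i) \<le> \<delta>)}.
        (\<Sum>i. ennreal (hd_term s (f i))))"

definition hausdorff_measure :: "real \<Rightarrow> real set \<Rightarrow> ennreal" where
  "hausdorff_measure s E = (SUP \<delta> \<in> {0<..}. hausdorff_pre s \<delta> E)"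

definition hausdorff_dim :: "real set \<Rightarrow> real" where
  "hausdorff_dim E = Inf {s. s \<ge> 0 \<and> hausdorff_measure s E = 0}"

text \<open>Gauss map; the (n+1)-st partial quotient of x in (0,1) is floor(1/T^n x).\<close>
definition gauss_map :: "real \<Rightarrow> real" where
  "gauss_map x = frac (1 / x)"

definition partial_quotient :: "real \<Rightarrow> nat \<Rightarrow> int" where
  "partial_quotient x n = \<lfloor>1 / (gauss_map ^^ n) x\<rfloor>"

definition cf_bounded_set :: "nat \<Rightarrow> real set" where
  "cf_bounded_set M = {x \<in> {0..1}. x \<notin> \<rat> \<and> (\<forall>n. partial_quotient x n \<le> int M)}"

definition w :: "nat \<Rightarrow> real" where
  "w M = hausdorff_dim (cf_bounded_set M)"

text \<open>(a,b,c,d) represents the matrix [[a,b],[c,d]].\<close>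
type_synonym mat2 = "int \<times> int \<times> int \<times> int"

fun mmul :: "mat2 \<Rightarrow> mat2 \<Rightarrow> mat2" where
  "mmul (a,b,c,d) (a',b',c',d') = (a*a' + b*c', a*b' + b*d', c*a' + d*c', c*b' + d*d')"

definition cf_gen :: "nat \<Rightarrow> mat2" where
  "cf_gen b = (0, 1, 1, int b)"

text \<open>[[0,1],[1,b_1]] ... [[0,1],[1,b_s]] = [[p_{s-1}, p_s],[q_{s-1}, q_s]]\<close>
definition cf_matrix :: "nat list \<Rightarrow> mat2" where
  "cf_matrix bs = foldr (\<lambda>b acc. mmul (cf_gen b) acc) bs (1, 0, 0, 1)"

fun q_entry :: "mat2 \<Rightarrow> int" where
  "q_entry (a,b,c,d) = d"

section \<open>SL_2(F_p), entries represented in {0..p-1}\<close>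

fun red :: "nat \<Rightarrow> mat2 \<Rightarrow> mat2" where
  "red p (a,b,c,d) = (a mod int p, b mod int p, c mod int p, d mod int p)"

definition mulp :: "nat \<Rightarrow> mat2 \<Rightarrow> mat2 \<Rightarrow> mat2" where
  "mulp p x y = red p (mmul x y)"

fun invp :: "nat \<Rightarrow> mat2 \<Rightarrow> mat2" where
  "invp p (a,b,c,d) = red p (d, -b, -c, a)"

definition SL2 :: "nat \<Rightarrow> mat2 set" where
  "SL2 p = {(a,b,c,d). a \<in> {0..<int p} \<and> b \<in> {0..<int p} \<and> c \<in> {0..<int p} \<and>
                        d \<in> {0..<int p} \<and> (a*d - b*c) mod int p = 1 mod int p}"

definition borel :: "nat \<Rightarrow> mat2 set" where
  "borel p = {x \<in> SL2 p. fst (snd (snd x)) = 0}"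

definition cfA :: "nat \<Rightarrow> nat \<Rightarrow> mat2 set" where
  "cfA M p = {red p (cf_matrix bs) | bs. even (length bs) \<and> set bs \<subseteq> {1..M} \<and>
                                        q_entry (cf_matrix bs) \<le> int p - 1}"

definition prod3 :: "nat \<Rightarrow> mat2 set \<Rightarrow> mat2 set \<Rightarrow> mat2 set \<Rightarrow> mat2 set" where
  "prod3 p X Y Z = {mulp p (mulp p x y) z | x y z. x \<in> X \<and> y \<in> Y \<and> z \<in> Z}"

definition inv_set :: "nat \<Rightarrow> mat2 set \<Rightarrow> mat2 set" where
  "inv_set p X = invp p ` X"

end

theory Submission
  imports Defs
begin

definition mA :: "mat2 \<Rightarrow> int" where "mA x = fst x"
definition mB :: "mat2 \<Rightarrow> int" where "mB x = fst (snd x)"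
definition mC :: "mat2 \<Rightarrow> int" where "mC x = fst (snd (snd x))"
definition mD :: "mat2 \<Rightarrow> int" where "mD x = snd (snd (snd x))"

lemma mABCD_simps[simp]: "mA (a,b,c,d) = a" "mB (a,b,c,d) = b" "mC (a,b,c,d) = c" "mD (a,b,c,d) = d"
  by (simp_all add: mA_def mB_def mC_def mD_def)

lemma mat_eq: "(x::mat2) = (mA x, mB x, mC x, mD x)"
  by (simp add: mA_def mB_def mC_def mD_def)

lemma mmul_assoc: "mmul (mmul x y) z = mmul x (mmul y z)"
proof -
  obtain a b c d where x: "x = (a,b,c,d)" by (cases x) auto
  obtain a' b' c' d' where y: "y = (a',b',c',d')" by (cases y) auto
  obtain a'' b'' c'' d'' where z: "z = (a'',b'',c'',d'')" by (cases z) auto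
  show ?thesis unfolding x y z by (simp add: algebra_simps)
qed

lemma cf_matrix_Nil[simp]: "cf_matrix [] = (1,0,0,1)"
  by (simp add: cf_matrix_def)

lemma cf_matrix_Cons: "cf_matrix (b # ws) = mmul (cf_gen b) (cf_matrix ws)"
  by (simp add: cf_matrix_def)

lemma mmul_id_left[simp]: "mmul (1,0,0,1) x = x"
  by (cases x) simp
lemma mmul_id_right[simp]: "mmul x (1,0,0,1) = x"
  by (cases x) simp

lemma cf_matrix_append: "cf_matrix (u @ v) = mmul (cf_matrix u) (cf_matrix v)"
  by (induction u) (simp_all add: cf_matrix_Cons mmul_assoc)

lemma cf_matrix_Cons': "cf_matrix (b # ws) = (let m = cf_matrix ws in (mC m, mD m, mA m + int b * mC m, mB m + int b * mD m))"
proof -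
  obtain a1 b1 c1 d1 where x: "cf_matrix ws = (a1,b1,c1,d1)" by (cases "cf_matrix ws") auto
  show ?thesis by (simp add: cf_matrix_Cons x cf_gen_def mA_def mB_def mC_def mD_def)
qed

lemma mA_Cons[simp]: "mA (cf_matrix (b#ws)) = mC (cf_matrix ws)"
  and mB_Cons[simp]: "mB (cf_matrix (b#ws)) = mD (cf_matrix ws)"
  and mC_Cons[simp]: "mC (cf_matrix (b#ws)) = mA (cf_matrix ws) + int b * mC (cf_matrix ws)"
  and mD_Cons[simp]: "mD (cf_matrix (b#ws)) = mB (cf_matrix ws) + int b * mD (cf_matrix ws)"
  by (simp_all only: cf_matrix_Cons' Let_def) (simp_all add: mA_def mB_def mC_def mD_def)

lemma mABCD_Nil[simp]: "mA (cf_matrix []) = 1" "mB (cf_matrix []) = 0" "mC (cf_matrix []) = 0" "mD (cf_matrix []) = 1"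
  by (simp_all add: mA_def mB_def mC_def mD_def)

abbreviation "cA ws \<equiv> mA (cf_matrix ws)"
abbreviation "cB ws \<equiv> mB (cf_matrix ws)"
abbreviation "cC ws \<equiv> mC (cf_matrix ws)"
abbreviation "cD ws \<equiv> mD (cf_matrix ws)"

lemma cf_det: "cA ws * cD ws - cB ws * cC ws = (-1) ^ length ws"
proof (induction ws)
  case Nil then show ?case by simp
next
  case (Cons b ws)
  have "cA (b#ws) * cD (b#ws) - cB (b#ws) * cC (b#ws) = - (cA ws * cD ws - cB ws * cC ws)"
    by (simp add: algebra_simps)
  then show ?case using Cons by simp
qed

definition pos :: "nat list \<Rightarrow> bool" where "pos ws \<longleftrightarrow> (\<forall>b\<in>set ws. b \<ge> 1)"

lemma pos_Cons[simp]: "pos (b#ws) \<longleftrightarrow> b \<ge> 1 \<and> pos ws"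
  by (auto simp: pos_def)
lemma pos_Nil[simp]: "pos []" by (simp add: pos_def)
lemma pos_append[simp]: "pos (u @ v) \<longleftrightarrow> pos u \<and> pos v" by (auto simp: pos_def)

lemma cf_nonneg0: "cA ws \<ge> 0 \<and> cB ws \<ge> 0 \<and> cC ws \<ge> 0 \<and> cD ws \<ge> 1 \<and> cB ws \<le> cD ws \<and> cC ws \<le> cD ws
   \<and> (ws \<noteq> [] \<longrightarrow> cA ws \<le> cB ws)"
  if "pos ws"
  using that
proof (induction ws)
  case Nil then show ?case by simp
next
  case (Cons b ws)
  then have b: "int b \<ge> 1" and IH: "cA ws \<ge> 0 \<and> cB ws \<ge> 0 \<and> cC ws \<ge> 0 \<and> cD ws \<ge> 1 \<and> cB ws \<le> cD ws \<and> cC ws \<le> cD ws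
   \<and> (ws \<noteq> [] \<longrightarrow> cA ws \<le> cB ws)" by auto
  show ?case
  proof (cases ws)
    case Nil then show ?thesis using b by simp
  next
    case (Cons b' ws')
    have "cA ws \<le> cB ws" using IH Cons by simp
    have m1: "int b * cC ws \<le> int b * cD ws" using IH b by (intro mult_left_mono) auto
    have m2: "cD ws \<le> int b * cD ws" using IH b by simp
    have m3: "0 \<le> int b * cC ws" using IH b by simp
    show ?thesis using IH b m1 m2 m3 \<open>cA ws \<le> cB ws\<close>
      unfolding mA_Cons mB_Cons mC_Cons mD_Cons by (intro conjI impI; linarith)
  qed
qed

lemma cf_nonneg: "pos ws \<Longrightarrow> cA ws \<ge> 0 \<and> cB ws \<ge> 0 \<and> cC ws \<ge> 0 \<and> cD ws \<ge> 1 \<and> cB ws \<le> cD ws \<and> cC ws \<le> cD ws"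
  using cf_nonneg0 by blast

lemma cB_pos: "ws \<noteq> [] \<Longrightarrow> pos ws \<Longrightarrow> cB ws \<ge> 1"
  by (cases ws) (auto dest: cf_nonneg)

lemma cD_le_prod: "pos ws \<Longrightarrow> cD ws \<le> (\<Prod>b\<leftarrow>ws. int b + 1)"
proof (induction ws)
  case Nil then show ?case by simp
next
  case (Cons b ws)
  then have IH: "cD ws \<le> (\<Prod>b\<leftarrow>ws. int b + 1)" by simp
  have "cD (b#ws) = cB ws + int b * cD ws" by simp
  also have "\<dots> \<le> (int b + 1) * cD ws" using cf_nonneg[of ws] Cons.prems by (simp add: algebra_simps)
  also have "\<dots> \<le> (int b + 1) * (\<Prod>b\<leftarrow>ws. int b + 1)" using IH by (intro mult_left_mono) auto
  finally show ?case by simp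
qed

lemma mmul_comps: "mA (mmul x y) = mA x * mA y + mB x * mC y"
  "mB (mmul x y) = mA x * mB y + mB x * mD y"
  "mC (mmul x y) = mC x * mA y + mD x * mC y"
  "mD (mmul x y) = mC x * mB y + mD x * mD y"
proof -
  obtain a b c d where x: "x = (a,b,c,d)" by (cases x) auto
  obtain a' b' c' d' where y: "y = (a',b',c',d')" by (cases y) auto
  show "mA (mmul x y) = mA x * mA y + mB x * mC y"
  "mB (mmul x y) = mA x * mB y + mB x * mD y"
  "mC (mmul x y) = mC x * mA y + mD x * mC y"
  "mD (mmul x y) = mC x * mB y + mD x * mD y" unfolding x y by simp_all
qed

lemma cD_append: "cD (u @ v) = cC u * cB v + cD u * cD v"
  by (simp add: cf_matrix_append mmul_comps)

lemma cD_append_ge: "pos u \<Longrightarrow> pos v \<Longrightarrow> cD (u @ v) \<ge> cD u * cD v"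
  using cf_nonneg[of u] cf_nonneg[of v] by (simp add: cD_append)

definition transp :: "mat2 \<Rightarrow> mat2" where "transp x = (mA x, mC x, mB x, mD x)"

lemma cf_matrix_rev: "cf_matrix (rev ws) = transp (cf_matrix ws)"
proof (induction ws)
  case Nil then show ?case by (simp add: transp_def)
next
  case (Cons b ws)
  have "cf_matrix (rev (b#ws)) = mmul (cf_matrix (rev ws)) (cf_matrix [b])"
    by (simp add: cf_matrix_append)
  also have "\<dots> = transp (cf_matrix (b # ws))"
    unfolding Cons by (simp add: transp_def cf_matrix_Cons cf_gen_def mmul_comps mat_eq[symmetric] algebra_simps)
  finally show ?case .
qed

lemma cf_rev_comps: "cA (rev ws) = cA ws" "cB (rev ws) = cC ws" "cC (rev ws) = cB ws" "cD (rev ws) = cD ws"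
  by (simp_all add: cf_matrix_rev transp_def)

definition good :: "nat list \<Rightarrow> bool" where "good ws \<longleftrightarrow> pos ws \<and> (ws = [] \<or> last ws \<ge> 2)"

lemma good_Cons: "good (b # ws) \<Longrightarrow> good ws"
  by (cases ws) (auto simp: good_def)

lemma good_lt: "good ws \<Longrightarrow> cB ws < cD ws"
proof (induction ws)
  case Nil then show ?case by simp
next
  case (Cons b ws)
  have gw: "good ws" using Cons.prems good_Cons by blast
  have p: "pos ws" "b \<ge> 1" using Cons.prems by (auto simp: good_def)
  show ?case
  proof (cases "b \<ge> 2")
    case True
    have "2 * cD ws \<le> int b * cD ws" using True cf_nonneg[OF p(1)] by (intro mult_right_mono) auto
    then show ?thesis using cf_nonneg[OF p(1)] unfolding mB_Cons mD_Cons by linarith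
  next
    case False
    then have "b = 1" using p by simp
    then have "ws \<noteq> []" using Cons.prems by (auto simp: good_def)
    then have "cB ws \<ge> 1" using cB_pos p by blast
    then show ?thesis using \<open>b = 1\<close> by simp
  qed
qed

lemma good_inj: "good u \<Longrightarrow> good v \<Longrightarrow> cB u = cB v \<Longrightarrow> cD u = cD v \<Longrightarrow> u = v"
proof (induction u arbitrary: v)
  case Nil
  then show ?case
  proof (cases v)
    case (Cons b v')
    then have "pos v'" using Nil by (simp add: good_def)
    then show ?thesis using Nil Cons cf_nonneg[of v'] by simp
  qed simp
next
  case (Cons b u)
  show ?case
  proof (cases v)
    case Nil
    then have "pos u" using Cons by (simp add: good_def)
    then show ?thesis using Cons Nil cf_nonneg[of u] by simp
  next
    case (Cons b' v')
    note V = this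
    have gu: "good u" and gv: "good v'" using Cons.prems V good_Cons by blast+
    have pu: "pos u" and pv: "pos v'" using gu gv by (auto simp: good_def)
    have l1: "cB u < cD u" and l2: "cB v' < cD v'" using good_lt gu gv by auto
    have e1: "cD u = cD v'" using Cons.prems V by simp
    have e2: "cB u + int b * cD u = cB v' + int b' * cD v'" using Cons.prems V by simp
    have n1: "0 \<le> cB u" "0 \<le> cB v'" using cf_nonneg pu pv by auto
    have "(cB u + int b * cD u) div cD u = int b"
      using l1 n1 by (simp add: div_pos_pos_trivial)
    moreover have "(cB v' + int b' * cD v') div cD v' = int b'"
      using l2 n1 by (simp add: div_pos_pos_trivial)
    ultimately have "b = b'" using e1 e2 by simp
    then have "cB u = cB v'" using e2 e1 by simp
    then have "u = v'" using Cons.IH gu gv e1 by blast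
    then show ?thesis using V \<open>b = b'\<close> by simp
  qed
qed


definition detm :: "mat2 \<Rightarrow> int" where "detm x = mA x * mD x - mB x * mC x"
definition adjm :: "mat2 \<Rightarrow> mat2" where "adjm x = (mD x, - mB x, - mC x, mA x)"
definition dot :: "int \<times> int \<Rightarrow> int \<times> int \<Rightarrow> int" where "dot r v = fst r * fst v + snd r * snd v"
definition det2 :: "int \<times> int \<Rightarrow> int \<times> int \<Rightarrow> int" where "det2 u v = fst u * snd v - snd u * fst v"
definition mv :: "mat2 \<Rightarrow> int \<times> int \<Rightarrow> int \<times> int" where
  "mv x c = (mA x * fst c + mB x * snd c, mC x * fst c + mD x * snd c)"
definition bil :: "int \<times> int \<Rightarrow> mat2 \<Rightarrow> int \<times> int \<Rightarrow> int" where
  "bil r x c = dot r (mv x c)"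

lemma red_comps[simp]: "mA (red p x) = mA x mod int p" "mB (red p x) = mB x mod int p"
   "mC (red p x) = mC x mod int p" "mD (red p x) = mD x mod int p"
proof -
  obtain a b c d where x: "x = (a,b,c,d)" by (cases x) auto
  show "mA (red p x) = mA x mod int p" "mB (red p x) = mB x mod int p"
   "mC (red p x) = mC x mod int p" "mD (red p x) = mD x mod int p" unfolding x by simp_all
qed

lemma mat_eqI: "mA x = mA y \<Longrightarrow> mB x = mB y \<Longrightarrow> mC x = mC y \<Longrightarrow> mD x = mD y \<Longrightarrow> x = y"
  by (metis mat_eq)

lemma red_red[simp]: "red p (red p x) = red p x"
  by (rule mat_eqI) simp_all

lemma modlem1: "(a mod n * b + c mod n * d) mod n = (a*b + c*d) mod (n::int)"
  by (metis mod_add_eq mod_mult_left_eq)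
lemma modlem2: "(a * (b mod n) + c * (d mod n)) mod n = (a*b+c*d) mod (n::int)"
  by (metis mod_add_eq mod_mult_right_eq)
lemma modlem3: "(a mod n * (d mod n) - b mod n * (c mod n)) mod n = (a*d - b*c) mod (n::int)"
  by (metis mod_diff_eq mod_mult_eq)
lemma modlem4: "d mod n = 1 mod n \<Longrightarrow> (d * y) mod n = y mod (n::int)"
  by (metis mod_mult_left_eq mult_1)

lemma red_mmul_left[simp]: "red p (mmul (red p x) y) = red p (mmul x y)"
  by (rule mat_eqI) (simp_all add: mmul_comps modlem1)
lemma red_mmul_right[simp]: "red p (mmul x (red p y)) = red p (mmul x y)"
  by (rule mat_eqI) (simp_all add: mmul_comps modlem2)

lemma mulp_assoc: "mulp p (mulp p x y) z = mulp p x (mulp p y z)"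
  by (simp add: mulp_def mmul_assoc)

lemma detm_mmul: "detm (mmul x y) = detm x * detm y"
  by (simp add: detm_def mmul_comps algebra_simps)

lemma detm_red_mod: "detm (red p x) mod int p = detm x mod int p"
  by (simp add: detm_def modlem3)

lemma SL2_iff: "x \<in> SL2 p \<longleftrightarrow> red p x = x \<and> detm x mod int p = 1 mod int p" if "p > 0"
proof -
  obtain a b c d where x: "x = (a,b,c,d)" by (cases x) auto
  have r: "\<And>t::int. t mod int p = t \<longleftrightarrow> 0 \<le> t \<and> t < int p"
    using that by (metis atLeastLessThan_iff mod_pos_pos_trivial pos_mod_sign pos_mod_bound of_nat_0_less_iff)
  show ?thesis unfolding x SL2_def detm_def by (auto simp: r)
qed

lemma SL2_red: "p > 0 \<Longrightarrow> x \<in> SL2 p \<Longrightarrow> red p x = x"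
  using SL2_iff by blast

lemma mulp_SL2: "p > 0 \<Longrightarrow> x \<in> SL2 p \<Longrightarrow> y \<in> SL2 p \<Longrightarrow> mulp p x y \<in> SL2 p"
  unfolding SL2_iff mulp_def
  by (metis detm_mmul detm_red_mod mod_mult_eq mult_1 red_red)

lemma adjm_comps[simp]: "mA (adjm x) = mD x" "mB (adjm x) = - mB x" "mC (adjm x) = - mC x" "mD (adjm x) = mA x"
  by (simp_all add: adjm_def)

lemma invp_eq: "invp p x = red p (adjm x)"
  by (cases x) (simp add: adjm_def)

lemma invp_SL2: "p > 0 \<Longrightarrow> x \<in> SL2 p \<Longrightarrow> invp p x \<in> SL2 p"
  unfolding SL2_iff invp_eq
  by (metis detm_red_mod red_red detm_def adjm_comps mult.commute mult_minus_left mult_minus_right minus_mult_minus diff_minus_eq_add)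

definition scal :: "int \<Rightarrow> mat2" where "scal d = (d, 0, 0, d)"

lemma adjm_mmul: "mmul (adjm x) x = scal (detm x)" "mmul x (adjm x) = scal (detm x)"
  by (rule mat_eqI; simp add: mmul_comps scal_def detm_def algebra_simps)+

lemma scal_mmul: "mmul (scal d) y = (d * mA y, d * mB y, d * mC y, d * mD y)"
   "mmul y (scal d) = (d * mA y, d * mB y, d * mC y, d * mD y)"
  by (rule mat_eqI; simp add: mmul_comps scal_def)+

lemma red_scal_unit: "d mod int p = 1 mod int p \<Longrightarrow> red p (d * mA y, d * mB y, d * mC y, d * mD y) = red p y"
  by (rule mat_eqI) (simp_all add: modlem4)

lemma red_cong_mmul: "red p x = red p x' \<Longrightarrow> red p y = red p y' \<Longrightarrow> red p (mmul x y) = red p (mmul x' y')"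
  by (metis red_mmul_left red_mmul_right)

lemma SL2_finite: "finite (SL2 p)"
proof -
  have "SL2 p \<subseteq> {0..<int p} \<times> {0..<int p} \<times> {0..<int p} \<times> {0..<int p}"
    unfolding SL2_def by auto
  then show ?thesis by (rule finite_subset) auto
qed

lemma borel_sub: "borel p \<subseteq> SL2 p" unfolding borel_def by auto
lemma borel_finite: "finite (borel p)" using SL2_finite borel_sub finite_subset by blast

lemma recover:
  assumes "p > 0" "g \<in> SL2 p" "h \<in> SL2 p"
  shows "red p (mmul (mmul (adjm g) (mulp p (mulp p g b) h)) (adjm h)) = red p b"
proof -
  have dg: "detm g mod int p = 1 mod int p" and dh: "detm h mod int p = 1 mod int p"
    using assms SL2_iff by blast+
  have "red p (mmul (mmul (adjm g) (mulp p (mulp p g b) h)) (adjm h))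
      = red p (mmul (mmul (adjm g) (mmul (mmul g b) h)) (adjm h))"
    unfolding mulp_def by (intro red_cong_mmul refl) (simp)
  also have "mmul (mmul (adjm g) (mmul (mmul g b) h)) (adjm h) = mmul (mmul (mmul (adjm g) g) b) (mmul h (adjm h))"
    by (simp add: mmul_assoc)
  also have "\<dots> = mmul (mmul (scal (detm g)) b) (scal (detm h))"
    by (simp add: adjm_mmul)
  also have "red p \<dots> = red p b"
    using dg dh by (intro mat_eqI) (simp_all add: scal_mmul modlem4)
  finally show ?thesis .
qed

definition Tset :: "nat \<Rightarrow> mat2 \<Rightarrow> mat2 \<Rightarrow> mat2 set" where
  "Tset p g h = (\<lambda>b. mulp p (mulp p g b) h) ` borel p"

lemma Tset_card: assumes "p > 0" "g \<in> SL2 p" "h \<in> SL2 p"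
  shows "card (Tset p g h) = card (borel p)"
  unfolding Tset_def
proof (rule card_image, rule inj_onI)
  fix b b' assume b: "b \<in> borel p" "b' \<in> borel p" and e: "mulp p (mulp p g b) h = mulp p (mulp p g b') h"
  have "red p b = red p b'" using recover[OF assms, of b] recover[OF assms, of b'] e by simp
  then show "b = b'" using b borel_sub SL2_red assms(1) by (metis subsetD)
qed

lemma Tset_SL2: "p > 0 \<Longrightarrow> g \<in> SL2 p \<Longrightarrow> h \<in> SL2 p \<Longrightarrow> Tset p g h \<subseteq> SL2 p"
  unfolding Tset_def using borel_sub mulp_SL2 by blast

lemma Tset_finite: "finite (Tset p g h)"
  unfolding Tset_def using borel_finite by simp

lemma Tset_sub: assumes "p > 0" "g \<in> SL2 p" "h \<in> SL2 p" "x \<in> Tset p g h"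
  shows "int p dvd bil (- mC g, mA g) x (mD h, - mC h)"
proof -
  obtain b where b: "b \<in> borel p" "x = mulp p (mulp p g b) h" using assms(4) unfolding Tset_def by auto
  have "red p (mmul (mmul (adjm g) x) (adjm h)) = red p b" using recover[OF assms(1-3)] b by simp
  then have "mC (mmul (mmul (adjm g) x) (adjm h)) mod int p = mC b mod int p"
    by (metis red_comps(3))
  moreover have "mC b = 0" using b unfolding borel_def mC_def by simp
  moreover have "mC (mmul (mmul (adjm g) x) (adjm h)) = bil (- mC g, mA g) x (mD h, - mC h)"
    by (simp add: mmul_comps bil_def dot_def mv_def algebra_simps)
  ultimately show ?thesis by (simp add: dvd_eq_mod_eq_0)
qed

lemma borel_card: assumes "prime p" shows "card (borel p) \<ge> p * (p - 1)"
proof -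
  define P where "P = int p"
  have P1: "P > 1" using assms prime_gt_1_nat P_def by simp
  have inv: "\<exists>d. d \<in> {0..<P} \<and> (a * d) mod P = 1" if "a \<in> {1..<P}" for a
  proof -
    have "prime P" using assms P_def by simp
    have "\<not> P dvd a" using that P1 zdvd_not_zless by auto
    then have "coprime P a" using prime_imp_coprime \<open>prime P\<close> by blast
    then obtain u v where uv: "u * a + v * P = 1" using bezout_int[of a P]
      by (metis gcd.commute coprime_iff_gcd_eq_1)
    have "(a * (u mod P)) mod P = (a * u) mod P" by (simp add: mod_mult_right_eq)
    also have "a * u = 1 - v * P" using uv by (simp add: algebra_simps)
    also have "(1 - v * P) mod P = 1"
    proof -
      have "(1 + (-v) * P) mod P = 1 mod P" by (rule mod_mult_self1)
      then show ?thesis using P1 by simp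
    qed
    finally show ?thesis using P1 by (intro exI[of _ "u mod P"]) simp
  qed
  define iv where "iv a = (SOME d. d \<in> {0..<P} \<and> (a * d) mod P = 1)" for a
  have iv: "iv a \<in> {0..<P} \<and> (a * iv a) mod P = 1" if "a \<in> {1..<P}" for a
    unfolding iv_def using someI_ex[OF inv[OF that]] .
  define f where "f = (\<lambda>(a::int,t::int). (a, t, 0::int, iv a))"
  have "f ` ({1..<P} \<times> {0..<P}) \<subseteq> borel p"
  proof
    fix y assume "y \<in> f ` ({1..<P} \<times> {0..<P})"
    then obtain a t where at: "a \<in> {1..<P}" "t \<in> {0..<P}" "y = (a, t, 0, iv a)"
      unfolding f_def by auto
    show "y \<in> borel p" using iv[OF at(1)] at P1 unfolding borel_def SL2_def P_def by auto
  qed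
  moreover have "inj_on f ({1..<P} \<times> {0..<P})" unfolding f_def by (auto intro: inj_onI)
  ultimately have "card ({1..<P} \<times> {0..<P}) \<le> card (borel p)"
    using borel_finite by (metis card_image card_mono)
  moreover have "card ({1..<P} \<times> {0..<P}) = (p - 1) * p"
    unfolding card_cartesian_product P_def using P1 P_def by (simp add: nat_diff_distrib)
  ultimately show ?thesis by (simp add: mult.commute)
qed

lemma range_eq: "0 \<le> a \<Longrightarrow> a < P \<Longrightarrow> 0 \<le> b \<Longrightarrow> b < P \<Longrightarrow> P dvd a - b \<Longrightarrow> a = (b::int)"
  by (metis mod_eq_dvd_iff mod_pos_pos_trivial)

lemma SL2_range: "x \<in> SL2 p \<Longrightarrow> mA x \<in> {0..<int p} \<and> mB x \<in> {0..<int p} \<and> mC x \<in> {0..<int p} \<and> mD x \<in> {0..<int p}"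
  unfolding SL2_def by auto

lemma SL2_det_ndvd: "prime p \<Longrightarrow> x \<in> SL2 p \<Longrightarrow> \<not> int p dvd detm x"
proof
  assume pr: "prime p" and x: "x \<in> SL2 p" and d: "int p dvd detm x"
  have p1: "int p > 1" using pr prime_gt_1_nat by simp
  have "detm x mod int p = 1 mod int p" using x SL2_iff pr prime_gt_0_nat by blast
  then show False using d p1 by (simp add: dvd_eq_mod_eq_0)
qed

lemma SL2_det_mod: "prime p \<Longrightarrow> x \<in> SL2 p \<Longrightarrow> int p dvd detm x - 1"
  using SL2_iff prime_gt_0_nat by (metis mod_eq_dvd_iff)

lemma orth:
  assumes "prime p" "int p dvd dot y u" "int p dvd dot y v" "\<not> int p dvd det2 u v"
  shows "int p dvd fst y \<and> int p dvd snd y"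
proof -
  have pr: "prime (int p)" using assms(1) by simp
  have "fst y * det2 u v = dot y u * snd v - dot y v * snd u"
    by (simp add: dot_def det2_def algebra_simps)
  then have "int p dvd fst y * det2 u v" using assms(2,3) by simp
  then have 1: "int p dvd fst y" using assms(4) pr prime_dvd_mult_iff by blast
  have "snd y * det2 u v = dot y v * fst u - dot y u * fst v"
    by (simp add: dot_def det2_def algebra_simps)
  then have "int p dvd snd y * det2 u v" using assms(2,3) by simp
  then have 2: "int p dvd snd y" using assms(4) pr prime_dvd_mult_iff by blast
  show ?thesis using 1 2 by simp
qed

lemma dot_comm: "dot a b = dot b a" by (simp add: dot_def mult.commute)

lemma mv_det2: "det2 (mv x c) (mv x c') = detm x * det2 c c'"
  by (simp add: det2_def mv_def detm_def algebra_simps)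

lemma adj_back:
  assumes "prime p" "x \<in> SL2 p" "int p dvd fst (mv x c)" "int p dvd snd (mv x c)"
  shows "int p dvd fst c \<and> int p dvd snd c"
proof -
  have pr: "prime (int p)" using assms(1) by simp
  have nd: "\<not> int p dvd detm x" using SL2_det_ndvd assms by blast
  have "fst c * detm x = mD x * fst (mv x c) - mB x * snd (mv x c)"
    by (simp add: mv_def detm_def algebra_simps)
  then have "int p dvd fst c * detm x" using assms(3,4) by simp
  then have 1: "int p dvd fst c" using nd pr prime_dvd_mult_iff by blast
  have "snd c * detm x = mA x * snd (mv x c) - mC x * fst (mv x c)"
    by (simp add: mv_def detm_def algebra_simps)
  then have "int p dvd snd c * detm x" using assms(3,4) by simp
  then have 2: "int p dvd snd c" using nd pr prime_dvd_mult_iff by blast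
  show ?thesis using 1 2 by simp
qed

definition Vline :: "nat \<Rightarrow> int \<times> int \<Rightarrow> (int \<times> int) set" where
  "Vline p r = {v. fst v \<in> {0..<int p} \<and> snd v \<in> {0..<int p} \<and> v \<noteq> (0,0) \<and> int p dvd dot r v}"

lemma Vline_finite: "finite (Vline p r)"
proof -
  have "Vline p r \<subseteq> {0..<int p} \<times> {0..<int p}" unfolding Vline_def by auto
  then show ?thesis by (rule finite_subset) auto
qed

lemma line_card:
  assumes "prime p" "\<not> (int p dvd fst r \<and> int p dvd snd r)"
  shows "card (Vline p r) \<le> p - 1"
proof -
  have pr: "prime (int p)" using assms(1) by simp
  have p1: "int p > 1" using assms(1) prime_gt_1_nat by simp
  have cardI: "card {1..<int p} = p - 1" using p1 by simp
  show ?thesis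
  proof (cases "int p dvd snd r")
    case False
    have inj: "inj_on fst (Vline p r)"
    proof (rule inj_onI)
      fix v v' assume v: "v \<in> Vline p r" "v' \<in> Vline p r" and e: "fst v = fst v'"
      have "dot r v - dot r v' = snd r * (snd v - snd v')" using e by (simp add: dot_def algebra_simps)
      moreover have "int p dvd dot r v - dot r v'" using v unfolding Vline_def by auto
      ultimately have "int p dvd snd v - snd v'" using False pr prime_dvd_mult_iff by metis
      then have "snd v = snd v'" using v unfolding Vline_def by (intro range_eq[of _ "int p"]) auto
      then show "v = v'" using e by (simp add: prod_eq_iff)
    qed
    have img: "fst ` Vline p r \<subseteq> {1..<int p}"
    proof
      fix a assume "a \<in> fst ` Vline p r"
      then obtain v where v: "v \<in> Vline p r" "a = fst v" by auto
      have "fst v \<noteq> 0"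
      proof
        assume f0: "fst v = 0"
        then have "dot r v = snd r * snd v" by (simp add: dot_def)
        then have "int p dvd snd r * snd v" using v unfolding Vline_def by auto
        then have "int p dvd snd v" using False pr prime_dvd_mult_iff by metis
        then have "snd v = 0" using v unfolding Vline_def by (intro range_eq[of _ "int p"]) auto
        then show False using f0 v unfolding Vline_def by (simp add: prod_eq_iff)
      qed
      then show "a \<in> {1..<int p}" using v unfolding Vline_def by auto
    qed
    have "card (Vline p r) \<le> card {1..<int p}"
      using card_inj_on_le[OF inj img] by simp
    then show ?thesis using cardI by simp
  next
    case True
    then have F: "\<not> int p dvd fst r" using assms(2) by blast
    have inj: "inj_on snd (Vline p r)"
    proof (rule inj_onI)
      fix v v' assume v: "v \<in> Vline p r" "v' \<in> Vline p r" and e: "snd v = snd v'"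
      have "dot r v - dot r v' = fst r * (fst v - fst v')" using e by (simp add: dot_def algebra_simps)
      moreover have "int p dvd dot r v - dot r v'" using v unfolding Vline_def by auto
      ultimately have "int p dvd fst v - fst v'" using F pr prime_dvd_mult_iff by metis
      then have "fst v = fst v'" using v unfolding Vline_def by (intro range_eq[of _ "int p"]) auto
      then show "v = v'" using e by (simp add: prod_eq_iff)
    qed
    have img: "snd ` Vline p r \<subseteq> {1..<int p}"
    proof
      fix a assume "a \<in> snd ` Vline p r"
      then obtain v where v: "v \<in> Vline p r" "a = snd v" by auto
      have "snd v \<noteq> 0"
      proof
        assume f0: "snd v = 0"
        then have "dot r v = fst r * fst v" by (simp add: dot_def)
        then have "int p dvd fst r * fst v" using v unfolding Vline_def by auto
        then have "int p dvd fst v" using F pr prime_dvd_mult_iff by metis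
        then have "fst v = 0" using v unfolding Vline_def by (intro range_eq[of _ "int p"]) auto
        then show False using f0 v unfolding Vline_def by (simp add: prod_eq_iff)
      qed
      then show "a \<in> {1..<int p}" using v unfolding Vline_def by auto
    qed
    have "card (Vline p r) \<le> card {1..<int p}"
      using card_inj_on_le[OF inj img] by simp
    then show ?thesis using cardI by simp
  qed
qed


definition S2 :: "nat \<Rightarrow> int \<times> int \<Rightarrow> int \<times> int \<Rightarrow> int \<times> int \<Rightarrow> int \<times> int \<Rightarrow> mat2 set" where
  "S2 p r c r' c' = {x \<in> SL2 p. int p dvd bil r x c \<and> int p dvd bil r' x c'}"

lemma S2_caseA:
  assumes "prime p" "\<not> (int p dvd fst r \<and> int p dvd snd r)" "\<not> int p dvd det2 c c'"
  shows "S2 p r c r c' = {}"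
proof (rule ccontr)
  assume "S2 p r c r c' \<noteq> {}"
  then obtain x where x: "x \<in> SL2 p" "int p dvd dot r (mv x c)" "int p dvd dot r (mv x c')"
    unfolding S2_def bil_def by auto
  have pr: "prime (int p)" using assms(1) by simp
  have "\<not> int p dvd detm x * det2 c c'"
    using SL2_det_ndvd[OF assms(1) x(1)] assms(3) pr prime_dvd_mult_iff by metis
  then have "\<not> int p dvd det2 (mv x c) (mv x c')" by (simp add: mv_det2)
  then have "int p dvd fst r \<and> int p dvd snd r" using orth[OF assms(1) x(2,3)] by blast
  then show False using assms(2) by blast
qed

lemma S2_caseB:
  assumes "prime p" "\<not> (int p dvd fst c \<and> int p dvd snd c)" "\<not> int p dvd det2 r r'"
  shows "S2 p r c r' c = {}"
proof (rule ccontr)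
  assume "S2 p r c r' c \<noteq> {}"
  then obtain x where x: "x \<in> SL2 p" "int p dvd dot (mv x c) r" "int p dvd dot (mv x c) r'"
    unfolding S2_def bil_def by (auto simp: dot_comm)
  have "int p dvd fst (mv x c) \<and> int p dvd snd (mv x c)" using orth[OF assms(1) x(2,3) assms(3)] .
  then have "int p dvd fst c \<and> int p dvd snd c" using adj_back[OF assms(1) x(1)] by blast
  then show False using assms(2) by blast
qed

lemma S2_caseC:
  assumes pr0: "prime p" and dr: "\<not> int p dvd det2 r r'" and dc: "\<not> int p dvd det2 c c'"
  shows "card (S2 p r c r' c') \<le> p - 1"
proof -
  define P where "P = int p"
  have pr: "prime P" using pr0 P_def by simp
  have p0: "p > 0" using pr0 prime_gt_0_nat by blast
  have cnz: "\<not> (P dvd fst c \<and> P dvd snd c)"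
  proof
    assume "P dvd fst c \<and> P dvd snd c"
    then have "P dvd det2 c c'" unfolding det2_def by auto
    then show False using dc P_def by simp
  qed
  have rnz: "\<not> (P dvd fst r \<and> P dvd snd r)"
  proof
    assume "P dvd fst r \<and> P dvd snd r"
    then have "P dvd det2 r r'" unfolding det2_def by auto
    then show False using dr P_def by simp
  qed
  define \<phi> where "\<phi> x = (fst (mv x c) mod P, snd (mv x c) mod P)" for x
  have wnz: "\<not> (P dvd fst (mv x c) \<and> P dvd snd (mv x c))" if "x \<in> SL2 p" for x
    using adj_back[OF pr0 that] cnz P_def by blast
  have img: "\<phi> ` S2 p r c r' c' \<subseteq> Vline p r"
  proof
    fix v assume "v \<in> \<phi> ` S2 p r c r' c'"
    then obtain x where x: "x \<in> S2 p r c r' c'" "v = \<phi> x" by auto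
    have xs: "x \<in> SL2 p" and d1: "P dvd dot r (mv x c)" using x unfolding S2_def bil_def P_def by auto
    have "dot r v mod P = dot r (mv x c) mod P"
      unfolding x(2) \<phi>_def dot_def by (simp add: modlem2)
    then have "P dvd dot r v" using d1 by (simp add: dvd_eq_mod_eq_0)
    moreover have "v \<noteq> (0,0)"
    proof
      assume "v = (0,0)"
      then have "P dvd fst (mv x c) \<and> P dvd snd (mv x c)" unfolding x(2) \<phi>_def by (simp add: dvd_eq_mod_eq_0)
      then show False using wnz[OF xs] by blast
    qed
    moreover have "fst v \<in> {0..<P}" "snd v \<in> {0..<P}" unfolding x(2) \<phi>_def using p0 P_def by auto
    ultimately show "v \<in> Vline p r" unfolding Vline_def P_def by auto
  qed
  have inj: "inj_on \<phi> (S2 p r c r' c')"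
  proof (rule inj_onI)
    fix x x' assume x: "x \<in> S2 p r c r' c'" and x': "x' \<in> S2 p r c r' c'" and e: "\<phi> x = \<phi> x'"
    have xs: "x \<in> SL2 p" "x' \<in> SL2 p" using x x' unfolding S2_def by auto
    define w where "w = mv x c"
    define w' where "w' = mv x' c"
    define z where "z = mv x c'"
    define z' where "z' = mv x' c'"
    have hw: "P dvd dot r w" "P dvd dot r w'" "P dvd dot r' z" "P dvd dot r' z'"
      using x x' unfolding S2_def bil_def P_def w_def w'_def z_def z'_def by auto
    have ew: "P dvd fst w - fst w'" "P dvd snd w - snd w'"
      using e unfolding \<phi>_def w_def w'_def by (simp_all add: mod_eq_dvd_iff)
    have n1: "\<not> P dvd dot r' w"
    proof
      assume "P dvd dot r' w"
      then have "P dvd fst w \<and> P dvd snd w"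
        using orth[OF pr0, of w r r'] hw(1) dr dot_comm P_def by metis
      then show False using wnz[OF xs(1)] w_def by blast
    qed
    have dd1: "P dvd det2 w z - det2 w' z'"
    proof -
      have "det2 w z - det2 w' z' = (detm x - 1) * det2 c c' - (detm x' - 1) * det2 c c'"
        unfolding w_def z_def w'_def z'_def mv_det2 by (simp add: algebra_simps)
      moreover have "P dvd detm x - 1" "P dvd detm x' - 1" using SL2_det_mod[OF pr0] xs P_def by auto
      ultimately show ?thesis by simp
    qed
    have dd2: "P dvd det2 w z' - det2 w' z'"
    proof -
      have "det2 w z' - det2 w' z' = (fst w - fst w') * snd z' - (snd w - snd w') * fst z'"
        by (simp add: det2_def algebra_simps)
      then show ?thesis using ew by simp
    qed
    define y where "y = (fst z - fst z', snd z - snd z')"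
    have y1: "dot y (- snd w, fst w) = det2 w z - det2 w z'"
      unfolding y_def by (simp add: dot_def det2_def algebra_simps)
    have "P dvd det2 w z - det2 w z'"
      using dd1 dd2 by (metis (no_types, lifting) diff_diff_eq2 dvd_diff diff_add_cancel)
    then have y1': "P dvd dot y (- snd w, fst w)" using y1 by simp
    have y2: "dot y r' = dot r' z - dot r' z'" unfolding y_def by (simp add: dot_def algebra_simps)
    then have y2': "P dvd dot y r'" using hw(3,4) by simp
    have "det2 (- snd w, fst w) r' = - dot r' w" by (simp add: det2_def dot_def algebra_simps)
    then have "\<not> P dvd det2 (- snd w, fst w) r'" using n1 by simp
    then have ez: "P dvd fst z - fst z'" "P dvd snd z - snd z'"
      using orth[OF pr0, of y "(- snd w, fst w)" r'] y1' y2' P_def unfolding y_def by auto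
    define d1 where "d1 = (mA x - mA x', mB x - mB x')"
    define d2 where "d2 = (mC x - mC x', mD x - mD x')"
    have "dot d1 c = fst w - fst w'" "dot d1 c' = fst z - fst z'"
      "dot d2 c = snd w - snd w'" "dot d2 c' = snd z - snd z'"
      unfolding d1_def d2_def w_def w'_def z_def z'_def mv_def dot_def by (simp_all add: algebra_simps)
    then have "P dvd fst d1 \<and> P dvd snd d1" "P dvd fst d2 \<and> P dvd snd d2"
      using orth[OF pr0, of d1 c c'] orth[OF pr0, of d2 c c'] ew ez dc P_def by auto
    then have "P dvd mA x - mA x'" "P dvd mB x - mB x'" "P dvd mC x - mC x'" "P dvd mD x - mD x'"
      unfolding d1_def d2_def by auto
    moreover have "mA x \<in> {0..<P} \<and> mB x \<in> {0..<P} \<and> mC x \<in> {0..<P} \<and> mD x \<in> {0..<P}"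
       "mA x' \<in> {0..<P} \<and> mB x' \<in> {0..<P} \<and> mC x' \<in> {0..<P} \<and> mD x' \<in> {0..<P}"
      using SL2_range xs P_def by auto
    ultimately have "mA x = mA x'" "mB x = mB x'" "mC x = mC x'" "mD x = mD x'"
      by (meson atLeastLessThan_iff range_eq)+
    then show "x = x'" by (rule mat_eqI)
  qed
  have "card (S2 p r c r' c') \<le> card (Vline p r)"
    using card_inj_on_le[OF inj img Vline_finite] .
  also have "\<dots> \<le> p - 1" using line_card[OF pr0] rnz P_def by simp
  finally show ?thesis .
qed


lemma bonf:
  assumes "finite I" "\<forall>i\<in>I. finite (T i)" "\<forall>i\<in>I. L \<le> card (T i)"
    "\<forall>i\<in>I. \<forall>j\<in>I. i \<noteq> j \<longrightarrow> card (T i \<inter> T j) \<le> K"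
  shows "real (card (\<Union>i\<in>I. T i)) \<ge> real (card I) * L - real (card I) * (real (card I) - 1) / 2 * K"
  using assms
proof (induction I rule: finite_induct)
  case empty then show ?case by simp
next
  case (insert k I)
  define U where "U = (\<Union>i\<in>I. T i)"
  define n where "n = card I"
  have fU: "finite U" unfolding U_def using insert by auto
  have fk: "finite (T k)" using insert by auto
  have IH: "real (card U) \<ge> real n * L - real n * (real n - 1) / 2 * K"
    unfolding U_def n_def using insert by auto
  have "T k \<inter> U = (\<Union>i\<in>I. T k \<inter> T i)" unfolding U_def by auto
  then have "card (T k \<inter> U) \<le> (\<Sum>i\<in>I. card (T k \<inter> T i))"
    using card_UN_le[OF insert.hyps(1), of "\<lambda>i. T k \<inter> T i"] by simp
  also have "\<dots> \<le> (\<Sum>i\<in>I. K)"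
    using insert by (intro sum_mono) (metis insertCI)
  finally have ci: "card (T k \<inter> U) \<le> n * K" unfolding n_def by simp
  have "card (T k \<union> U) + card (T k \<inter> U) = card (T k) + card U"
    using card_Un_Int[OF fk fU] by simp
  then have "real (card (T k \<union> U)) = real (card (T k)) + real (card U) - real (card (T k \<inter> U))"
    by (metis add_diff_cancel_right' of_nat_add)
  moreover have "real (card (T k)) \<ge> L" using insert by auto
  moreover have "real (card (T k \<inter> U)) \<le> real n * K" using ci by (metis of_nat_le_iff of_nat_mult)
  ultimately have "real (card (T k \<union> U)) \<ge> L + (real n * L - real n * (real n - 1) / 2 * K) - real n * K"
    using IH by linarith
  moreover have "card (insert k I) = n + 1" using insert n_def by simp
  moreover have "L + (real n * L - real n * (real n - 1) / 2 * K) - real n * K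
      = real (n + 1) * L - real (n + 1) * (real (n + 1) - 1) / 2 * K"
    by (simp add: field_simps)
  moreover have "(\<Union>i\<in>insert k I. T i) = T k \<union> U" unfolding U_def by auto
  ultimately show ?case by simp
qed

lemma red_box: "p > 0 \<Longrightarrow> red p x \<in> {0..<int p} \<times> {0..<int p} \<times> {0..<int p} \<times> {0..<int p}"
proof -
  assume p: "p > 0"
  obtain a b c d where x: "x = (a,b,c,d)" by (cases x)
  have "\<And>t. t mod int p \<in> {0..<int p}" using p by simp
  then show ?thesis unfolding x by simp
qed

lemma prod3_finite: "p > 0 \<Longrightarrow> finite (prod3 p X Y Z)"
proof -
  assume p: "p > 0"
  have "prod3 p X Y Z \<subseteq> {0..<int p} \<times> {0..<int p} \<times> {0..<int p} \<times> {0..<int p}"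
  proof
    fix u assume "u \<in> prod3 p X Y Z"
    then obtain x y z where "u = mulp p (mulp p x y) z" unfolding prod3_def by blast
    then show "u \<in> {0..<int p} \<times> {0..<int p} \<times> {0..<int p} \<times> {0..<int p}"
      unfolding mulp_def using red_box[OF p] by metis
  qed
  then show ?thesis by (rule finite_subset) auto
qed

lemma Tset_in_prod3: "g \<in> X \<Longrightarrow> h \<in> Z \<Longrightarrow> Tset p g h \<subseteq> prod3 p X (borel p) Z"
proof
  fix u assume g: "g \<in> X" and h: "h \<in> Z" and "u \<in> Tset p g h"
  then obtain b where b: "b \<in> borel p" "u = mulp p (mulp p g b) h" unfolding Tset_def by blast
  show "u \<in> prod3 p X (borel p) Z" unfolding prod3_def using g h b by blast
qed

lemma SL2_row_nz: "prime p \<Longrightarrow> g \<in> SL2 p \<Longrightarrow> \<not> (int p dvd fst (- mC g, mA g) \<and> int p dvd snd (- mC g, mA g))"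
proof
  assume pr: "prime p" and g: "g \<in> SL2 p" and d: "int p dvd fst (- mC g, mA g) \<and> int p dvd snd (- mC g, mA g)"
  then have "int p dvd mA g * mD g - mB g * mC g" by simp
  then show False using SL2_det_ndvd[OF pr g] unfolding detm_def by blast
qed
lemma SL2_col_nz: "prime p \<Longrightarrow> h \<in> SL2 p \<Longrightarrow> \<not> (int p dvd fst (mD h, - mC h) \<and> int p dvd snd (mD h, - mC h))"
proof
  assume pr: "prime p" and g: "h \<in> SL2 p" and d: "int p dvd fst (mD h, - mC h) \<and> int p dvd snd (mD h, - mC h)"
  then have "int p dvd mA h * mD h - mB h * mC h" by simp
  then show False using SL2_det_ndvd[OF pr g] unfolding detm_def by blast
qed

lemma main_count:
  assumes pr: "prime p" and G: "G \<subseteq> SL2 p" "G \<subseteq> X" and H: "H \<subseteq> SL2 p" "H \<subseteq> Z"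
    and fin: "finite G" "finite H"
    and iG: "\<forall>g1\<in>G. \<forall>g2\<in>G. g1 \<noteq> g2 \<longrightarrow> \<not> int p dvd det2 (- mC g1, mA g1) (- mC g2, mA g2)"
    and iH: "\<forall>h1\<in>H. \<forall>h2\<in>H. h1 \<noteq> h2 \<longrightarrow> \<not> int p dvd det2 (mD h1, - mC h1) (mD h2, - mC h2)"
    and n: "card G * card H \<le> p"
  shows "real (card (prod3 p X (borel p) Z)) \<ge> real (card G * card H) * real p ^ 2 / 4"
proof -
  have p0: "p > 0" and p2: "p \<ge> 2" using pr prime_gt_0_nat prime_ge_2_nat by auto
  define I where "I = G \<times> H"
  define T where "T = (\<lambda>(g,h). Tset p g h)"
  define L where "L = p * (p - 1)"
  define K where "K = p - 1"
  have fI: "finite I" unfolding I_def using fin by simp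
  have cI: "card I = card G * card H" unfolding I_def by (simp add: card_cartesian_product)
  have fT: "\<forall>i\<in>I. finite (T i)" unfolding T_def using Tset_finite by auto
  have LT: "\<forall>i\<in>I. L \<le> card (T i)"
  proof
    fix i assume "i \<in> I"
    obtain g h where i0: "i = (g,h)" by (cases i)
    have i: "i = (g,h)" "g \<in> SL2 p" "h \<in> SL2 p" using i0 \<open>i \<in> I\<close> G H unfolding I_def by auto
    show "L \<le> card (T i)" unfolding i T_def L_def using Tset_card[OF p0 i(2,3)] borel_card[OF pr] by simp
  qed
  have KT: "\<forall>i\<in>I. \<forall>j\<in>I. i \<noteq> j \<longrightarrow> card (T i \<inter> T j) \<le> K"
  proof (intro ballI impI)
    fix i j assume i: "i \<in> I" and j: "j \<in> I" and ij: "i \<noteq> j"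
    obtain g1 h1 where i0: "i = (g1,h1)" by (cases i)
    obtain g2 h2 where j0: "j = (g2,h2)" by (cases j)
    have i': "i = (g1,h1)" "g1 \<in> G" "h1 \<in> H" using i i0 unfolding I_def by auto
    have j': "j = (g2,h2)" "g2 \<in> G" "h2 \<in> H" using j j0 unfolding I_def by auto
    have s: "g1 \<in> SL2 p" "g2 \<in> SL2 p" "h1 \<in> SL2 p" "h2 \<in> SL2 p" using i' j' G H by auto
    define r1 where "r1 = (- mC g1, mA g1)"
    define r2 where "r2 = (- mC g2, mA g2)"
    define c1 where "c1 = (mD h1, - mC h1)"
    define c2 where "c2 = (mD h2, - mC h2)"
    have sub: "T i \<inter> T j \<subseteq> S2 p r1 c1 r2 c2"
      unfolding T_def i' j' S2_def r1_def r2_def c1_def c2_def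
    proof
      fix x assume "x \<in> (case (g1, h1) of (g, h) \<Rightarrow> Tset p g h) \<inter> (case (g2, h2) of (g, h) \<Rightarrow> Tset p g h)"
      then have x: "x \<in> Tset p g1 h1" "x \<in> Tset p g2 h2" by simp_all
      have "x \<in> SL2 p" using Tset_SL2[OF p0 s(1) s(3)] x(1) by blast
      moreover have "int p dvd bil (- mC g1, mA g1) x (mD h1, - mC h1)" using Tset_sub[OF p0 s(1) s(3) x(1)] .
      moreover have "int p dvd bil (- mC g2, mA g2) x (mD h2, - mC h2)" using Tset_sub[OF p0 s(2) s(4) x(2)] .
      ultimately show "x \<in> {x \<in> SL2 p. int p dvd bil (- mC g1, mA g1) x (mD h1, - mC h1) \<and>
                                   int p dvd bil (- mC g2, mA g2) x (mD h2, - mC h2)}" by blast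
    qed
    have fS: "finite (S2 p r1 c1 r2 c2)" unfolding S2_def using SL2_finite by simp
    have "card (S2 p r1 c1 r2 c2) \<le> p - 1"
    proof (cases "g1 = g2")
      case True
      then have "h1 \<noteq> h2" using ij i' j' by simp
      then have "\<not> int p dvd det2 c1 c2" using iH i' j' unfolding c1_def c2_def by blast
      then have "S2 p r1 c1 r2 c2 = {}" using S2_caseA[OF pr SL2_row_nz[OF pr s(1)]] True
        unfolding r1_def r2_def by simp
      then show ?thesis by simp
    next
      case False
      then have dr: "\<not> int p dvd det2 r1 r2" using iG i' j' unfolding r1_def r2_def by blast
      show ?thesis
      proof (cases "h1 = h2")
        case True
        then have "S2 p r1 c1 r2 c2 = {}" using S2_caseB[OF pr SL2_col_nz[OF pr s(3)] dr]
          unfolding c1_def c2_def by simp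
        then show ?thesis by simp
      next
        case False
        then have "\<not> int p dvd det2 c1 c2" using iH i' j' unfolding c1_def c2_def by blast
        then show ?thesis using S2_caseC[OF pr dr] by blast
      qed
    qed
    then show "card (T i \<inter> T j) \<le> K" unfolding K_def using card_mono[OF fS sub] by simp
  qed
  have B: "real (card (\<Union>i\<in>I. T i)) \<ge> real (card I) * L - real (card I) * (real (card I) - 1) / 2 * K"
    using bonf[OF fI fT LT KT] .
  have sub: "(\<Union>i\<in>I. T i) \<subseteq> prod3 p X (borel p) Z"
  proof
    fix x assume "x \<in> (\<Union>i\<in>I. T i)"
    then obtain g h where gh: "g \<in> G" "h \<in> H" "x \<in> Tset p g h" unfolding I_def T_def by auto
    show "x \<in> prod3 p X (borel p) Z" using Tset_in_prod3[of g X h Z p] gh G H by blast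
  qed
  have "card (\<Union>i\<in>I. T i) \<le> card (prod3 p X (borel p) Z)"
    using card_mono[OF prod3_finite[OF p0] sub] .
  then have C: "real (card (prod3 p X (borel p) Z)) \<ge> real (card I) * L - real (card I) * (real (card I) - 1) / 2 * K"
    using B by linarith
  define nn where "nn = real (card I)"
  define pp where "pp = real p"
  have "real (card G * card H) \<le> real p" using n by (simp only: of_nat_le_iff)
  then have nn: "0 \<le> nn" "nn \<le> pp" using cI unfolding nn_def pp_def by auto
  have pp: "pp \<ge> 2" using p2 unfolding pp_def by simp
  have LK: "real L = pp * (pp - 1)" "real K = pp - 1" unfolding L_def K_def pp_def using p0
    by (simp_all add: of_nat_diff)
  have e1: "nn * real L - nn * (nn - 1) / 2 * real K = nn * (pp - 1) * (pp - (nn - 1) / 2)"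
    unfolding LK by (simp add: algebra_simps)
  have "pp - (nn - 1) / 2 \<ge> (pp + 1) / 2" using nn by (simp add: field_simps)
  then have "nn * (pp - 1) * (pp - (nn - 1) / 2) \<ge> nn * (pp - 1) * ((pp + 1) / 2)"
    using nn pp by (intro mult_left_mono) auto
  moreover have "nn * (pp - 1) * ((pp + 1) / 2) = nn * (pp^2 - 1) / 2" by (simp add: algebra_simps power2_eq_square)
  moreover have "nn * (pp^2 - 1) / 2 \<ge> nn * pp^2 / 4"
  proof -
    have "pp^2 \<ge> 2^2" using pp by (intro power_mono) auto
    then have "pp^2 \<ge> 4" by simp
    then have "(pp^2 - 1) / 2 \<ge> pp^2 / 4" by simp
    then show ?thesis using nn by (metis (no_types, opaque_lifting) mult_left_mono times_divide_eq_right)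
  qed
  ultimately have "nn * real L - nn * (nn - 1) / 2 * real K \<ge> nn * pp^2 / 4" using e1 by linarith
  then have "real (card (prod3 p X (borel p) Z)) \<ge> nn * pp^2 / 4" using C unfolding nn_def by linarith
  then show ?thesis using cI unfolding nn_def pp_def by simp
qed


definition Jb :: "nat list set" where
  "Jb = {[1,1],[1,2],[1,3],[2,1],[2,2],[2,3],[3,1],[3,2],[3,3]}"

definition wt :: "nat list \<Rightarrow> nat" where "wt u = prod_list (map (\<lambda>b. b + 1) u)"

definition Sfam :: "nat \<Rightarrow> nat list set" where
  "Sfam X = {concat us | us. set us \<subseteq> Jb \<and> prod_list (map wt us) \<le> X}"

lemma wt_append: "wt (u @ v) = wt u * wt v" by (simp add: wt_def)

lemma wt_concat: "wt (concat us) = prod_list (map wt us)"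
  by (induction us) (simp_all add: wt_append, simp add: wt_def)

lemma Jb_props: "u \<in> Jb \<Longrightarrow> set u \<subseteq> {1,2,3} \<and> length u = 2 \<and> wt u \<le> 16 \<and> wt u \<ge> 4"
  unfolding Jb_def by (auto simp: wt_def)

lemma concat_Jb: "set us \<subseteq> Jb \<Longrightarrow> set (concat us) \<subseteq> {1,2,3} \<and> even (length (concat us))"
proof (induction us)
  case Nil then show ?case by simp
next
  case (Cons u us)
  then show ?case using Jb_props[of u] by auto
qed

lemma Sfam_props: "l \<in> Sfam X \<Longrightarrow> set l \<subseteq> {1,2,3} \<and> even (length l) \<and> wt l \<le> X"
  unfolding Sfam_def using concat_Jb wt_concat by fastforce

lemma wt_ge_pow: "set l \<subseteq> {1,2,3} \<Longrightarrow> 2 ^ length l \<le> wt l"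
proof (induction l)
  case Nil then show ?case by (simp add: wt_def)
next
  case (Cons b l)
  then have "b \<ge> 1" "2 ^ length l \<le> wt l" by auto
  then have "2 * 2 ^ length l \<le> (b + 1) * wt l" by (intro mult_mono) auto
  then show ?case by (simp add: wt_def)
qed

lemma Sfam_finite: "finite (Sfam X)"
proof -
  have "Sfam X \<subseteq> {l. set l \<subseteq> {1,2,3} \<and> length l \<le> X}"
  proof
    fix l assume "l \<in> Sfam X"
    then have l: "set l \<subseteq> {1,2,3}" "wt l \<le> X" using Sfam_props by auto
    have "length l < 2 ^ length l" by (rule less_exp)
    also have "\<dots> \<le> wt l" using wt_ge_pow[OF l(1)] .
    finally show "l \<in> {l. set l \<subseteq> {1,2,3} \<and> length l \<le> X}" using l by auto
  qed
  moreover have "finite {l. set l \<subseteq> {1::nat,2,3} \<and> length l \<le> X}"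
    by (rule finite_lists_length_le) simp
  ultimately show ?thesis by (rule finite_subset)
qed

lemma Sfam_rec:
  assumes "X \<ge> 1"
  shows "insert [] (\<Union>u\<in>{u\<in>Jb. wt u \<le> X}. (\<lambda>l. u @ l) ` Sfam (X div wt u)) \<subseteq> Sfam X"
proof
  fix l assume "l \<in> insert [] (\<Union>u\<in>{u\<in>Jb. wt u \<le> X}. (\<lambda>l. u @ l) ` Sfam (X div wt u))"
  then consider "l = []" | u l' where "u \<in> Jb" "wt u \<le> X" "l' \<in> Sfam (X div wt u)" "l = u @ l'" by blast
  then show "l \<in> Sfam X"
  proof cases
    case 1
    then show ?thesis unfolding Sfam_def using assms by (auto intro!: exI[of _ "[]"])
  next
    case 2
    then obtain us where us: "l' = concat us" "set us \<subseteq> Jb" "prod_list (map wt us) \<le> X div wt u"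
      unfolding Sfam_def by auto
    have "prod_list (map wt (u # us)) = wt u * prod_list (map wt us)" by simp
    also have "\<dots> \<le> wt u * (X div wt u)" using us(3) by simp
    also have "\<dots> \<le> X" by simp
    finally show ?thesis unfolding Sfam_def using 2 us by (auto intro!: exI[of _ "u # us"])
  qed
qed

lemma Sfam_rec_card:
  assumes "X \<ge> 1"
  shows "card (insert [] (\<Union>u\<in>{u\<in>Jb. wt u \<le> X}. (\<lambda>l. u @ l) ` Sfam (X div wt u)))
       = 1 + (\<Sum>u\<in>{u\<in>Jb. wt u \<le> X}. card (Sfam (X div wt u)))"
proof -
  define U where "U = (\<Union>u\<in>{u\<in>Jb. wt u \<le> X}. (\<lambda>l. u @ l) ` Sfam (X div wt u))"
  have fJ: "finite {u\<in>Jb. wt u \<le> X}" unfolding Jb_def by simp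
  have disj: "\<forall>u\<in>{u\<in>Jb. wt u \<le> X}. \<forall>u'\<in>{u\<in>Jb. wt u \<le> X}. u \<noteq> u' \<longrightarrow>
      (\<lambda>l. u @ l) ` Sfam (X div wt u) \<inter> (\<lambda>l. u' @ l) ` Sfam (X div wt u') = {}"
  proof (intro ballI impI)
    fix u u' assume u: "u \<in> {u\<in>Jb. wt u \<le> X}" and u': "u' \<in> {u\<in>Jb. wt u \<le> X}" and ne: "u \<noteq> u'"
    have "length u = 2" "length u' = 2" using u u' Jb_props by auto
    then have "u @ l \<noteq> u' @ l'" for l l' using ne by (metis append_eq_append_conv)
    then show "(\<lambda>l. u @ l) ` Sfam (X div wt u) \<inter> (\<lambda>l. u' @ l) ` Sfam (X div wt u') = {}" by auto
  qed
  have cU: "card U = (\<Sum>u\<in>{u\<in>Jb. wt u \<le> X}. card ((\<lambda>l. u @ l) ` Sfam (X div wt u)))"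
    unfolding U_def using card_UN_disjoint[OF fJ _ disj] Sfam_finite by simp
  also have "\<dots> = (\<Sum>u\<in>{u\<in>Jb. wt u \<le> X}. card (Sfam (X div wt u)))"
    by (intro sum.cong refl card_image) (simp add: inj_on_def)
  finally have cU': "card U = \<dots>" .
  have "[] \<notin> U" unfolding U_def using Jb_props by fastforce
  moreover have "finite U" unfolding U_def using fJ Sfam_finite by simp
  ultimately show ?thesis using cU' unfolding U_def[symmetric] by simp
qed

lemma div_plus_one: "m > 0 \<Longrightarrow> real (X div m) + 1 \<ge> (real X + 1) / real m"
proof -
  assume m: "m > (0::nat)"
  have e: "m * (X div m) + X mod m = X" by (rule mult_div_mod_eq)
  have "X mod m < m" using m by simp
  then have "X + 1 \<le> m * (X div m) + m" using e by linarith
  then have "X + 1 \<le> m * (X div m + 1)" by (simp add: algebra_simps)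
  then have "real (X + 1) \<le> real (m * (X div m + 1))" by (simp only: of_nat_le_iff)
  then have "real X + 1 \<le> real m * (real (X div m) + 1)" by (simp add: algebra_simps)
  then show ?thesis using m by (simp add: divide_le_eq mult.commute)
qed

lemma Jb_sum: "(\<Sum>u\<in>Jb. 1 / real (wt u)) = 169 / 144"
  unfolding Jb_def by (simp add: wt_def)

lemma Sfam_card: "X \<ge> 1 \<Longrightarrow> real (card (Sfam X)) \<ge> (real X + 1) / 16"
proof (induction X rule: less_induct)
  case (less X)
  have sub: "insert [] (\<Union>u\<in>{u\<in>Jb. wt u \<le> X}. (\<lambda>l. u @ l) ` Sfam (X div wt u)) \<subseteq> Sfam X"
    using Sfam_rec less.prems by blast
  have cge: "card (Sfam X) \<ge> 1 + (\<Sum>u\<in>{u\<in>Jb. wt u \<le> X}. card (Sfam (X div wt u)))"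
    using card_mono[OF Sfam_finite sub] Sfam_rec_card[OF less.prems] by simp
  show ?case
  proof (cases "X < 16")
    case True
    then have "real (card (Sfam X)) \<ge> 1" using cge by simp
    moreover have "(real X + 1) / 16 \<le> 1" using True by simp
    ultimately show ?thesis by linarith
  next
    case False
    then have J: "{u\<in>Jb. wt u \<le> X} = Jb" using Jb_props by force
    have "(real X + 1) / 16 \<le> (real X + 1) / 16 * (\<Sum>u\<in>Jb. 1 / real (wt u))"
      unfolding Jb_sum by simp
    also have "\<dots> = (\<Sum>u\<in>Jb. ((real X + 1) / real (wt u)) / 16)"
      unfolding sum_distrib_left by (intro sum.cong) auto
    also have "\<dots> \<le> (\<Sum>u\<in>Jb. real (card (Sfam (X div wt u))))"
    proof (rule sum_mono)
      fix u assume u: "u \<in> Jb"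
      then have w: "wt u \<ge> 4" "wt u \<le> 16" using Jb_props by auto
      then have "0 < X div wt u" using False by (subst div_greater_zero_iff) auto
      then have d1: "X div wt u \<ge> 1" by simp
      have d2: "X div wt u < X" using w less.prems by simp
      have "(real X + 1) / real (wt u) / 16 \<le> (real (X div wt u) + 1) / 16"
        using div_plus_one[of "wt u" X] w by (intro divide_right_mono) auto
      also have "\<dots> \<le> real (card (Sfam (X div wt u)))" using less.IH[OF d2 d1] .
      finally show "(real X + 1) / real (wt u) / 16 \<le> real (card (Sfam (X div wt u)))" .
    qed
    also have "\<dots> \<le> real (card (Sfam X))"
    proof -
      have "(\<Sum>u\<in>Jb. card (Sfam (X div wt u))) \<le> card (Sfam X)" using cge unfolding J by linarith
      then have "real (\<Sum>u\<in>Jb. card (Sfam (X div wt u))) \<le> real (card (Sfam X))" by (simp only: of_nat_le_iff)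
      then show ?thesis by simp
    qed
    finally show ?thesis .
  qed
qed


lemma wt_int: "int (wt ws) = (\<Prod>b\<leftarrow>ws. int b + 1)"
  by (induction ws) (simp_all add: wt_def algebra_simps)

lemma cD_le_wt: "pos ws \<Longrightarrow> cD ws \<le> int (wt ws)"
  using cD_le_prod wt_int by simp

lemma coprime_BD: "pos ws \<Longrightarrow> coprime (cB ws) (cD ws)"
proof (rule coprimeI)
  fix k assume "pos ws" "k dvd cB ws" "k dvd cD ws"
  then have "k dvd cA ws * cD ws - cB ws * cC ws" by simp
  then have "k dvd (-1) ^ length ws" using cf_det by simp
  moreover have "is_unit ((-1::int) ^ length ws)" by simp
  ultimately show "is_unit k" by (rule dvd_unit_imp_unit)
qed

lemma good_distinct_det:
  assumes "good c1" "good c2" "c1 \<noteq> c2"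
  shows "cB c1 * cD c2 \<noteq> cD c1 * cB c2"
proof
  assume e: "cB c1 * cD c2 = cD c1 * cB c2"
  have p1: "pos c1" and p2: "pos c2" using assms by (auto simp: good_def)
  have cp1: "coprime (cD c1) (cB c1)" and cp2: "coprime (cD c2) (cB c2)"
    using coprime_BD[OF p1] coprime_BD[OF p2] by (auto simp: coprime_commute)
  have "cD c1 dvd cB c1 * cD c2" using e by simp
  then have d1: "cD c1 dvd cD c2" using cp1 by (simp add: coprime_dvd_mult_right_iff)
  have "cD c2 dvd cD c1 * cB c2" using e by (metis dvd_triv_left mult.commute)
  then have "cD c2 dvd cB c2 * cD c1" by (simp add: mult.commute)
  then have d2: "cD c2 dvd cD c1" using cp2 by (simp add: coprime_dvd_mult_right_iff)
  have pos1: "cD c1 \<ge> 1" and pos2: "cD c2 \<ge> 1" using cf_nonneg p1 p2 by auto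
  have eD: "cD c1 = cD c2" using d1 d2 pos1 pos2 by (simp add: zdvd_antisym_nonneg)
  then have "cB c1 = cB c2" using e pos1 by (simp add: mult.commute)
  then have "c1 = c2" using good_inj assms(1,2) eD by blast
  then show False using assms(3) by simp
qed

lemma ndvd_small: "z \<noteq> 0 \<Longrightarrow> \<bar>z\<bar> < P \<Longrightarrow> \<not> P dvd (z::int)"
proof
  assume z: "z \<noteq> 0" "\<bar>z\<bar> < P" "P dvd z"
  have "\<bar>P\<bar> \<le> \<bar>z\<bar>" using dvd_imp_le_int[OF z(1) z(3)] .
  then show False using z(2) by linarith
qed

lemma small_det_ndvd:
  assumes "good c1" "good c2" "c1 \<noteq> c2" "cD c1 \<le> D" "cD c2 \<le> D" "D * D < P"
  shows "\<not> P dvd (cB c1 * cD c2 - cD c1 * cB c2)"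
proof (rule ndvd_small)
  show "cB c1 * cD c2 - cD c1 * cB c2 \<noteq> 0" using good_distinct_det[OF assms(1-3)] by simp
  have p1: "pos c1" and p2: "pos c2" using assms by (auto simp: good_def)
  have n1: "0 \<le> cB c1" "cB c1 \<le> cD c1" "0 \<le> cB c2" "cB c2 \<le> cD c2"
    using cf_nonneg[OF p1] cf_nonneg[OF p2] by auto
  have "cB c1 * cD c2 \<le> D * D" using n1 assms(4,5) by (intro mult_mono) auto
  moreover have "cD c1 * cB c2 \<le> D * D" using n1 assms(4,5) by (intro mult_mono) auto
  moreover have "0 \<le> cB c1 * cD c2" "0 \<le> cD c1 * cB c2" using n1 by auto
  ultimately show "\<bar>cB c1 * cD c2 - cD c1 * cB c2\<bar> < P" using assms(6) by linarith
qed

lemma det2_mod_eq: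
  assumes "fst u mod P = fst u' mod P" "snd u mod P = snd u' mod P"
          "fst v mod P = fst v' mod P" "snd v mod P = snd v' mod P"
  shows "det2 u v mod P = det2 u' v' mod (P::int)"
proof -
  have "det2 u v mod P = (fst u mod P * (snd v mod P) - snd u mod P * (fst v mod P)) mod P"
    unfolding det2_def by (rule modlem3[symmetric])
  also have "\<dots> = (fst u' mod P * (snd v' mod P) - snd u' mod P * (fst v' mod P)) mod P"
    using assms by simp
  also have "\<dots> = det2 u' v' mod P" unfolding det2_def by (rule modlem3)
  finally show ?thesis .
qed

lemma cf_matrix_one: "cf_matrix [1] = (0,1,1,1)"
  by (simp add: cf_matrix_Cons cf_gen_def)

lemma m1_comps: "mA (cf_matrix (c @ [1])) = cB c" "mC (cf_matrix (c @ [1])) = cD c"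
   "mD (cf_matrix (c @ [1])) = cC c + cD c"
  by (simp_all add: cf_matrix_append cf_matrix_one mmul_comps)

lemma q_entry_mD: "q_entry x = mD x"
  by (cases x) simp

lemma red_SL2: assumes "p > 1" "detm x = 1" shows "red p x \<in> SL2 p"
  using assms SL2_iff[of p "red p x"] detm_red_mod[of p x] by simp

lemma detm_cf: "even (length ws) \<Longrightarrow> detm (cf_matrix ws) = 1"
  using cf_det[of ws] unfolding detm_def by simp


lemma gen_family:
  fixes f :: "nat list \<Rightarrow> mat2" and vec :: "mat2 \<Rightarrow> int \<times> int" and u :: "nat list \<Rightarrow> int \<times> int"
  assumes F: "\<forall>c\<in>F. good c \<and> cD c \<le> D" and D: "D * D < int p"
    and cong: "\<forall>c\<in>F. fst (vec (f c)) mod int p = fst (u c) mod int p \<and> snd (vec (f c)) mod int p = snd (u c) mod int p"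
    and du: "\<forall>c1\<in>F. \<forall>c2\<in>F. det2 (u c1) (u c2) = cB c1 * cD c2 - cD c1 * cB c2"
  shows "inj_on f F" "\<forall>g1\<in>f ` F. \<forall>g2\<in>f ` F. g1 \<noteq> g2 \<longrightarrow> \<not> int p dvd det2 (vec g1) (vec g2)"
proof -
  have key: "\<not> int p dvd det2 (vec (f c1)) (vec (f c2))" if c: "c1 \<in> F" "c2 \<in> F" "c1 \<noteq> c2" for c1 c2
  proof
    assume d: "int p dvd det2 (vec (f c1)) (vec (f c2))"
    have "det2 (vec (f c1)) (vec (f c2)) mod int p = det2 (u c1) (u c2) mod int p"
      using cong c by (intro det2_mod_eq) auto
    then have "int p dvd det2 (u c1) (u c2)" using d by (simp add: dvd_eq_mod_eq_0)
    then have "int p dvd cB c1 * cD c2 - cD c1 * cB c2" using du c by simp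
    moreover have "\<not> int p dvd cB c1 * cD c2 - cD c1 * cB c2"
      using small_det_ndvd[of c1 c2 D "int p"] F c D by auto
    ultimately show False by simp
  qed
  show "inj_on f F"
  proof (rule inj_onI, rule ccontr)
    fix c1 c2 assume c: "c1 \<in> F" "c2 \<in> F" "f c1 = f c2" "c1 \<noteq> c2"
    have "det2 (vec (f c1)) (vec (f c2)) = 0" using c(3) by (simp add: det2_def mult.commute)
    then show False using key[OF c(1,2,4)] by simp
  qed
  show "\<forall>g1\<in>f ` F. \<forall>g2\<in>f ` F. g1 \<noteq> g2 \<longrightarrow> \<not> int p dvd det2 (vec g1) (vec g2)"
    using key by blast
qed

definition F1 :: "nat \<Rightarrow> nat list set" where "F1 X = (\<lambda>l. l @ [2]) ` Sfam X"
definition F2 :: "nat \<Rightarrow> nat list set" where "F2 X = (\<lambda>l. l @ [2,2]) ` Sfam X"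

lemma F1_card: "card (F1 X) = card (Sfam X)"
  unfolding F1_def by (rule card_image) (simp add: inj_on_def)
lemma F2_card: "card (F2 X) = card (Sfam X)"
  unfolding F2_def by (rule card_image) (simp add: inj_on_def)

lemma good_app: "set l \<subseteq> {1,2,3} \<Longrightarrow> set t \<subseteq> {1,2,3} \<Longrightarrow> t \<noteq> [] \<Longrightarrow> last t \<ge> 2 \<Longrightarrow> good (l @ t)"
  unfolding good_def pos_def by auto

lemma F1_props: "c \<in> F1 X \<Longrightarrow> good c \<and> set c \<subseteq> {1,2,3} \<and> odd (length c) \<and> cD c \<le> int (3 * X)"
proof -
  assume "c \<in> F1 X"
  then obtain l where l: "l \<in> Sfam X" "c = l @ [2]" unfolding F1_def by auto
  have s: "set l \<subseteq> {1,2,3}" "even (length l)" "wt l \<le> X" using Sfam_props[OF l(1)] by auto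
  have g: "good c" unfolding l(2) using s by (intro good_app) auto
  have "cD c \<le> int (wt c)" using g cD_le_wt by (simp add: good_def)
  also have "wt c = 3 * wt l" unfolding l(2) by (simp add: wt_append wt_def)
  finally have "cD c \<le> int (3 * X)" using s(3) by simp
  then show ?thesis using g s l(2) by auto
qed

lemma F2_props: "c \<in> F2 X \<Longrightarrow> good c \<and> set c \<subseteq> {1,2,3} \<and> even (length c) \<and> cD c \<le> int (9 * X)"
proof -
  assume "c \<in> F2 X"
  then obtain l where l: "l \<in> Sfam X" "c = l @ [2,2]" unfolding F2_def by auto
  have s: "set l \<subseteq> {1,2,3}" "even (length l)" "wt l \<le> X" using Sfam_props[OF l(1)] by auto
  have g: "good c" unfolding l(2) using s by (intro good_app) auto
  have "cD c \<le> int (wt c)" using g cD_le_wt by (simp add: good_def)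
  also have "wt c = 9 * wt l" unfolding l(2) by (simp add: wt_append wt_def)
  finally have "cD c \<le> int (9 * X)" using s(3) by simp
  then show ?thesis using g s l(2) by auto
qed

lemma invp_comps: "mA (invp p x) = mD x mod int p" "mB (invp p x) = (- mB x) mod int p"
  "mC (invp p x) = (- mC x) mod int p" "mD (invp p x) = mA x mod int p"
  by (simp_all add: invp_eq)

lemma m1_comps': "cA (c @ [Suc 0]) = cB c" "cC (c @ [Suc 0]) = cD c" "cD (c @ [Suc 0]) = cC c + cD c"
  using m1_comps[of c] by simp_all

lemma big_count:
  assumes M: "M \<ge> 3" and pr: "prime p" and X1: "X \<ge> 1" and XP: "81 * X^2 < p"
    and k: "k \<le> card (Sfam X)" and kk: "k * k \<le> p"
  shows "real (card (prod3 p (cfA M p) (borel p) (cfA M p))) \<ge> real (k * k) * real p ^ 2 / 4"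
    and "real (card (prod3 p (inv_set p (cfA M p)) (borel p) (inv_set p (cfA M p)))) \<ge> real (k * k) * real p ^ 2 / 4"
proof -
  define P where "P = int p"
  have p1: "p > 1" using pr prime_gt_1_nat by blast
  define D where "D = int (9 * X)"
  have "9 * X \<le> 81 * X^2" using X1 by (simp add: power2_eq_square)
  then have b9: "9 * X \<le> p - 1" using XP by linarith
  have "(9*X)*(9*X) < p" using XP by (simp add: power2_eq_square)
  then have DD: "D * D < int p" unfolding D_def by (simp only: of_nat_mult[symmetric] of_nat_less_iff)
  have "int (9*X) \<le> int (p-1)" using b9 by (simp only: of_nat_le_iff)
  then have b9': "int (9*X) \<le> int p - 1" using p1 by simp
  have Fa1: "\<forall>c\<in>F1 X. good c \<and> cD c \<le> D" using F1_props unfolding D_def by fastforce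
  have Fa2: "\<forall>c\<in>F2 X. good c \<and> cD c \<le> D" using F2_props unfolding D_def by fastforce
  define g1 where "g1 c = red p (cf_matrix (c @ [1]))" for c
  define h1 where "h1 c = red p (cf_matrix (rev c))" for c
  have g1_SL2: "g1 c \<in> SL2 p" if "c \<in> F1 X" for c
    unfolding g1_def using F1_props[OF that] by (intro red_SL2[OF p1] detm_cf) simp
  have h1_SL2: "h1 c \<in> SL2 p" if "c \<in> F2 X" for c
    unfolding h1_def using F2_props[OF that] by (intro red_SL2[OF p1] detm_cf) simp
  have g1_A: "g1 c \<in> cfA M p" if "c \<in> F1 X" for c
  proof -
    have c: "good c" "set c \<subseteq> {1,2,3}" "odd (length c)" "cD c \<le> int (3 * X)" using F1_props[OF that] by auto
    have "cC c \<le> cD c" using cf_nonneg c(1) by (simp add: good_def)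
    moreover have "q_entry (cf_matrix (c @ [1])) = cC c + cD c" by (simp only: q_entry_mD m1_comps)
    ultimately have "q_entry (cf_matrix (c @ [1])) \<le> int p - 1"
      using c(4) b9' by simp
    moreover have "set (c @ [1]) \<subseteq> {1..M}" using c(2) M by auto
    moreover have "even (length (c @ [1]))" using c(3) by simp
    ultimately show ?thesis unfolding cfA_def g1_def by blast
  qed
  have h1_A: "h1 c \<in> cfA M p" if "c \<in> F2 X" for c
  proof -
    have c: "good c" "set c \<subseteq> {1,2,3}" "even (length c)" "cD c \<le> int (9 * X)" using F2_props[OF that] by auto
    have "q_entry (cf_matrix (rev c)) \<le> int p - 1"
      using c(4) b9' by (simp add: q_entry_mD cf_rev_comps)
    moreover have "set (rev c) \<subseteq> {1..M}" using c(2) M by auto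
    moreover have "even (length (rev c))" using c(3) by simp
    ultimately show ?thesis unfolding cfA_def h1_def by blast
  qed
  have cardS: "card (F1 X) \<ge> k" "card (F2 X) \<ge> k" using k F1_card F2_card by auto
  have GAc: "\<forall>c\<in>F1 X. fst ((\<lambda>g. (- mC g, mA g)) (g1 c)) mod int p = fst ((\<lambda>c. (- cD c, cB c)) c) mod int p \<and> snd ((\<lambda>g. (- mC g, mA g)) (g1 c)) mod int p = snd ((\<lambda>c. (- cD c, cB c)) c) mod int p"
    by (simp add: g1_def m1_comps' mod_minus_eq)
  have GAd: "\<forall>c1\<in>F1 X. \<forall>c2\<in>F1 X. det2 ((\<lambda>c. (- cD c, cB c)) c1) ((\<lambda>c. (- cD c, cB c)) c2) = cB c1 * cD c2 - cD c1 * cB c2"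
    by (simp add: det2_def algebra_simps)
  have GA: "inj_on g1 (F1 X)" "\<forall>x1\<in>g1 ` F1 X. \<forall>x2\<in>g1 ` F1 X. x1 \<noteq> x2 \<longrightarrow> \<not> int p dvd det2 (- mC x1, mA x1) (- mC x2, mA x2)"
    using gen_family[of "F1 X" D p "\<lambda>g. (- mC g, mA g)" g1 "\<lambda>c. (- cD c, cB c)", OF Fa1 DD GAc GAd] by auto
  have HAc: "\<forall>c\<in>F2 X. fst ((\<lambda>h. (mD h, - mC h)) (h1 c)) mod int p = fst ((\<lambda>c. (cD c, - cB c)) c) mod int p \<and> snd ((\<lambda>h. (mD h, - mC h)) (h1 c)) mod int p = snd ((\<lambda>c. (cD c, - cB c)) c) mod int p"
    by (simp add: h1_def cf_rev_comps mod_minus_eq)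
  have HAd: "\<forall>c1\<in>F2 X. \<forall>c2\<in>F2 X. det2 ((\<lambda>c. (cD c, - cB c)) c1) ((\<lambda>c. (cD c, - cB c)) c2) = cB c1 * cD c2 - cD c1 * cB c2"
    by (simp add: det2_def algebra_simps)
  have HA: "inj_on h1 (F2 X)" "\<forall>x1\<in>h1 ` F2 X. \<forall>x2\<in>h1 ` F2 X. x1 \<noteq> x2 \<longrightarrow> \<not> int p dvd det2 (mD x1, - mC x1) (mD x2, - mC x2)"
    using gen_family[of "F2 X" D p "\<lambda>h. (mD h, - mC h)" h1 "\<lambda>c. (cD c, - cB c)", OF Fa2 DD HAc HAd] by auto
  obtain G0 where G0: "G0 \<subseteq> g1 ` F1 X" "card G0 = k" "finite G0"
    using obtain_subset_with_card_n[of k "g1 ` F1 X"] card_image[OF GA(1)] cardS by auto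
  obtain H0 where H0: "H0 \<subseteq> h1 ` F2 X" "card H0 = k" "finite H0"
    using obtain_subset_with_card_n[of k "h1 ` F2 X"] card_image[OF HA(1)] cardS by auto
  show "real (card (prod3 p (cfA M p) (borel p) (cfA M p))) \<ge> real (k * k) * real p ^ 2 / 4"
  proof -
    have "real (card (prod3 p (cfA M p) (borel p) (cfA M p))) \<ge> real (card G0 * card H0) * real p ^ 2 / 4"
    proof (rule main_count[OF pr])
      show "G0 \<subseteq> SL2 p" "G0 \<subseteq> cfA M p" using G0(1) g1_SL2 g1_A by auto
      show "H0 \<subseteq> SL2 p" "H0 \<subseteq> cfA M p" using H0(1) h1_SL2 h1_A by auto
      show "finite G0" "finite H0" by fact+
      show "\<forall>g1\<in>G0. \<forall>g2\<in>G0. g1 \<noteq> g2 \<longrightarrow> \<not> int p dvd det2 (- mC g1, mA g1) (- mC g2, mA g2)"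
        using GA(2) G0(1) by blast
      show "\<forall>h1\<in>H0. \<forall>h2\<in>H0. h1 \<noteq> h2 \<longrightarrow> \<not> int p dvd det2 (mD h1, - mC h1) (mD h2, - mC h2)"
        using HA(2) H0(1) by blast
      show "card G0 * card H0 \<le> p" using G0 H0 kk by simp
    qed
    then show ?thesis using G0 H0 by simp
  qed
  define g2 where "g2 c = invp p (h1 c)" for c
  define h2 where "h2 c = invp p (g1 c)" for c
  have GIc: "\<forall>c\<in>F2 X. fst ((\<lambda>g. (- mC g, mA g)) (g2 c)) mod int p = fst ((\<lambda>c. (cB c, cD c)) c) mod int p \<and> snd ((\<lambda>g. (- mC g, mA g)) (g2 c)) mod int p = snd ((\<lambda>c. (cB c, cD c)) c) mod int p"
    by (simp add: g2_def h1_def invp_comps cf_rev_comps mod_minus_eq)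
  have GId: "\<forall>c1\<in>F2 X. \<forall>c2\<in>F2 X. det2 ((\<lambda>c. (cB c, cD c)) c1) ((\<lambda>c. (cB c, cD c)) c2) = cB c1 * cD c2 - cD c1 * cB c2"
    by (simp add: det2_def algebra_simps)
  have GI: "inj_on g2 (F2 X)" "\<forall>x1\<in>g2 ` F2 X. \<forall>x2\<in>g2 ` F2 X. x1 \<noteq> x2 \<longrightarrow> \<not> int p dvd det2 (- mC x1, mA x1) (- mC x2, mA x2)"
    using gen_family[of "F2 X" D p "\<lambda>g. (- mC g, mA g)" g2 "\<lambda>c. (cB c, cD c)", OF Fa2 DD GIc GId] by auto
  have HIc: "\<forall>c\<in>F1 X. fst ((\<lambda>h. (mD h, - mC h)) (h2 c)) mod int p = fst ((\<lambda>c. (cB c, cD c)) c) mod int p \<and> snd ((\<lambda>h. (mD h, - mC h)) (h2 c)) mod int p = snd ((\<lambda>c. (cB c, cD c)) c) mod int p"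
    by (simp add: h2_def g1_def invp_comps m1_comps' mod_minus_eq)
  have HId: "\<forall>c1\<in>F1 X. \<forall>c2\<in>F1 X. det2 ((\<lambda>c. (cB c, cD c)) c1) ((\<lambda>c. (cB c, cD c)) c2) = cB c1 * cD c2 - cD c1 * cB c2"
    by (simp add: det2_def algebra_simps)
  have HI: "inj_on h2 (F1 X)" "\<forall>x1\<in>h2 ` F1 X. \<forall>x2\<in>h2 ` F1 X. x1 \<noteq> x2 \<longrightarrow> \<not> int p dvd det2 (mD x1, - mC x1) (mD x2, - mC x2)"
    using gen_family[of "F1 X" D p "\<lambda>h. (mD h, - mC h)" h2 "\<lambda>c. (cB c, cD c)", OF Fa1 DD HIc HId] by auto
  obtain G1 where G1: "G1 \<subseteq> g2 ` F2 X" "card G1 = k" "finite G1"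
    using obtain_subset_with_card_n[of k "g2 ` F2 X"] card_image[OF GI(1)] cardS by auto
  obtain H1 where H1: "H1 \<subseteq> h2 ` F1 X" "card H1 = k" "finite H1"
    using obtain_subset_with_card_n[of k "h2 ` F1 X"] card_image[OF HI(1)] cardS by auto
  show "real (card (prod3 p (inv_set p (cfA M p)) (borel p) (inv_set p (cfA M p)))) \<ge> real (k * k) * real p ^ 2 / 4"
  proof -
    have p0: "p > 0" using p1 by simp
    have "real (card (prod3 p (inv_set p (cfA M p)) (borel p) (inv_set p (cfA M p)))) \<ge> real (card G1 * card H1) * real p ^ 2 / 4"
    proof (rule main_count[OF pr])
      show "G1 \<subseteq> SL2 p" using G1(1) h1_SL2 invp_SL2[OF p0] unfolding g2_def by blast
      show "G1 \<subseteq> inv_set p (cfA M p)" using G1(1) h1_A unfolding g2_def inv_set_def by blast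
      show "H1 \<subseteq> SL2 p" using H1(1) g1_SL2 invp_SL2[OF p0] unfolding h2_def by blast
      show "H1 \<subseteq> inv_set p (cfA M p)" using H1(1) g1_A unfolding h2_def inv_set_def by blast
      show "finite G1" "finite H1" by fact+
      show "\<forall>g1\<in>G1. \<forall>g2\<in>G1. g1 \<noteq> g2 \<longrightarrow> \<not> int p dvd det2 (- mC g1, mA g1) (- mC g2, mA g2)"
        using GI(2) G1(1) by blast
      show "\<forall>h1\<in>H1. \<forall>h2\<in>H1. h1 \<noteq> h2 \<longrightarrow> \<not> int p dvd det2 (mD h1, - mC h1) (mD h2, - mC h2)"
        using HI(2) H1(1) by blast
      show "card G1 * card H1 \<le> p" using G1 H1 kk by simp
    qed
    then show ?thesis using G1 H1 by simp
  qed
qed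


lemma id_in_cfA: "p \<ge> 2 \<Longrightarrow> (1,0,0,1) \<in> cfA M p"
proof -
  assume p: "p \<ge> 2"
  have "red p (cf_matrix []) = (1,0,0,1)" using p by simp
  moreover have "q_entry (cf_matrix []) \<le> int p - 1" using p by simp
  moreover have "even (length ([]::nat list))" "set ([]::nat list) \<subseteq> {1..M}" by auto
  ultimately show ?thesis unfolding cfA_def by (intro CollectI exI[of _ "[]"]) simp
qed

lemma id_in_borel: "p \<ge> 2 \<Longrightarrow> (1,0,0,1) \<in> borel p"
  unfolding borel_def SL2_def by simp

lemma trivial_bound:
  assumes "prime p"
  shows "card (prod3 p (cfA M p) (borel p) (cfA M p)) \<ge> 1"
    "card (prod3 p (inv_set p (cfA M p)) (borel p) (inv_set p (cfA M p))) \<ge> 1"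
proof -
  have p: "p \<ge> 2" using assms prime_ge_2_nat by blast
  have mI: "mulp p (mulp p (1,0,0,1) (1,0,0,1)) (1,0,0,1) = (1,0,0,1)" using p by (simp add: mulp_def)
  have iI: "invp p (1,0,0,1) = (1,0,0,1)" using p by simp
  have "(1,0,0,1) \<in> prod3 p (cfA M p) (borel p) (cfA M p)"
    unfolding prod3_def using id_in_cfA[OF p] id_in_borel[OF p] mI
    by (intro CollectI exI[of _ "(1,0,0,1)"]) simp
  then have "prod3 p (cfA M p) (borel p) (cfA M p) \<noteq> {}" by blast
  then show "card (prod3 p (cfA M p) (borel p) (cfA M p)) \<ge> 1"
    using prod3_finite[of p] p by (simp add: Suc_le_eq card_gt_0_iff)
  have "(1,0,0,1) \<in> inv_set p (cfA M p)" unfolding inv_set_def using id_in_cfA[OF p] iI by (metis image_eqI)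
  then have "(1,0,0,1) \<in> prod3 p (inv_set p (cfA M p)) (borel p) (inv_set p (cfA M p))"
    unfolding prod3_def using id_in_borel[OF p] mI
    by (intro CollectI exI[of _ "(1,0,0,1)"]) simp
  then have "prod3 p (inv_set p (cfA M p)) (borel p) (inv_set p (cfA M p)) \<noteq> {}" by blast
  then show "card (prod3 p (inv_set p (cfA M p)) (borel p) (inv_set p (cfA M p))) \<ge> 1"
    using prod3_finite[of p] p by (simp add: Suc_le_eq card_gt_0_iff)
qed

lemma large_p_params:
  assumes "p \<ge> (102400::nat)"
  obtains X k where "X \<ge> 1" "81 * X^2 < p" "real k \<le> (real X + 1) / 16" "k * k \<le> p"
    "real (k * k) \<ge> real p / 102400"
proof -
  define s where "s = sqrt (real p)"
  have sp: "s * s = real p" "s \<ge> 0" unfolding s_def by simp_all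
  have s320: "s \<ge> 320"
  proof -
    have "sqrt (102400::real) = 320" by (simp add: real_sqrt_eq_iff)
    have "real (102400::nat) \<le> real p" using assms by (simp only: of_nat_le_iff)
    then have "sqrt (real (102400::nat)) \<le> s" unfolding s_def by (rule real_sqrt_le_mono)
    then show ?thesis by simp
  qed
  define X where "X = nat \<lfloor>s / 10\<rfloor>"
  have X1: "real X \<le> s / 10" "real X > s / 10 - 1" unfolding X_def using sp s320 by (simp_all add: of_nat_nat) linarith+
  define k where "k = nat \<lfloor>(real X + 1) / 16\<rfloor>"
  have "real k = of_int \<lfloor>(real X + 1) / 16\<rfloor>" unfolding k_def by simp
  then have k1: "real k \<le> (real X + 1) / 16" "real k > (real X + 1) / 16 - 1"
    using floor_correct[of "(real X + 1) / 16"] by linarith+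
  have Xge: "real X \<ge> 31" using X1 s320 by linarith
  then have Xge1: "X \<ge> 1" by simp
  have "real X * real X \<le> (s/10) * (s/10)" using X1 by (intro mult_mono) auto
  then have "100 * (real X)^2 \<le> real p" using sp by (simp add: power2_eq_square)
  moreover have "81 * (real X)^2 < 100 * (real X)^2" using Xge by simp
  ultimately have "81 * (real X)^2 < real p" by linarith
  then have "real (81 * X^2) < real p" by simp
  then have c2: "81 * X^2 < p" by (simp only: of_nat_less_iff)
  have "(real X + 1) / 16 \<le> real X" using Xge by (simp add: field_simps)
  then have "real k \<le> real X" using k1(1) by (rule order_trans[rotated])
  then have "real k * real k \<le> real X * real X" by (intro mult_mono) auto
  also have "\<dots> \<le> real p" using \<open>100 * (real X)^2 \<le> real p\<close> by (simp add: power2_eq_square)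
  finally have "real (k * k) \<le> real p" by simp
  then have c4: "k * k \<le> p" by (simp only: of_nat_le_iff)
  have "(real X + 1) / 16 > s / 160" using X1(2) by (simp add: field_simps)
  moreover have "s / 160 - 1 \<ge> s / 320" using s320 by (simp add: field_simps)
  ultimately have "real k \<ge> s / 320" using k1(2) by linarith
  then have "real k * real k \<ge> (s/320) * (s/320)" using s320 by (intro mult_mono) auto
  then have "real (k * k) \<ge> real p / 102400" using sp by (simp add: field_simps)
  then show ?thesis using that Xge1 c2 k1(1) c4 by blast
qed

lemma final_M3:
  assumes "M \<ge> 3"
  shows "\<exists>c>0. \<forall>p::nat. prime p \<longrightarrow>
           real (card (prod3 p (cfA M p) (borel p) (cfA M p))) \<ge> c * real p ^ 3 \<and>
           real (card (prod3 p (inv_set p (cfA M p)) (borel p) (inv_set p (cfA M p))))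
              \<ge> c * real p ^ 3"
proof (intro exI[of _ "1 / 102400^3"] conjI allI impI)
  show "(0::real) < 1 / 102400 ^ 3" by simp
  fix p :: nat assume pr: "prime p"
  define c :: real where "c = 1 / 102400^3"
  have goal: "real (card (prod3 p (cfA M p) (borel p) (cfA M p))) \<ge> c * real p ^ 3 \<and>
     real (card (prod3 p (inv_set p (cfA M p)) (borel p) (inv_set p (cfA M p)))) \<ge> c * real p ^ 3"
  proof (cases "p < 102400")
    case True
    have "real p ^ 3 \<le> 102400 ^ 3" using True by (intro power_mono) auto
    then have "c * real p ^ 3 \<le> 1" unfolding c_def by simp
    moreover have "real (card (prod3 p (cfA M p) (borel p) (cfA M p))) \<ge> 1"
      "real (card (prod3 p (inv_set p (cfA M p)) (borel p) (inv_set p (cfA M p)))) \<ge> 1"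
      using trivial_bound[OF pr, of M] by simp_all
    ultimately show ?thesis by linarith
  next
    case False
    then obtain X k where Xk: "X \<ge> 1" "81 * X^2 < p" "real k \<le> (real X + 1) / 16" "k * k \<le> p"
      "real (k * k) \<ge> real p / 102400" using large_p_params by (metis not_le)
    have kS: "k \<le> card (Sfam X)" using Xk(3) Sfam_card[OF Xk(1)] by linarith
    have B: "real (card (prod3 p (cfA M p) (borel p) (cfA M p))) \<ge> real (k * k) * real p ^ 2 / 4"
      "real (card (prod3 p (inv_set p (cfA M p)) (borel p) (inv_set p (cfA M p)))) \<ge> real (k * k) * real p ^ 2 / 4"
      using big_count[OF assms pr Xk(1,2) kS Xk(4)] by auto
    have "real (k * k) * real p ^ 2 / 4 \<ge> (real p / 102400) * real p ^ 2 / 4"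
      using Xk(5) by (intro divide_right_mono mult_right_mono) auto
    moreover have "(real p / 102400) * real p ^ 2 / 4 \<ge> c * real p ^ 3"
      unfolding c_def by (simp add: field_simps power3_eq_cube power2_eq_square)
    ultimately show ?thesis using B by linarith
  qed
  then show "real (card (prod3 p (cfA M p) (borel p) (cfA M p))) \<ge> 1 / 102400^3 * real p ^ 3"
    "real (card (prod3 p (inv_set p (cfA M p)) (borel p) (inv_set p (cfA M p)))) \<ge> 1 / 102400^3 * real p ^ 3"
    unfolding c_def by auto
qed


lemma mat_eqI': "mA x = mA y \<Longrightarrow> mB x = mB y \<Longrightarrow> mC x = mC y \<Longrightarrow> mD x = mD y \<Longrightarrow> x = y"
  by (metis mat_eq)

definition mob :: "mat2 \<Rightarrow> real \<Rightarrow> real" where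
  "mob m t = (real_of_int (mA m) * t + real_of_int (mB m)) / (real_of_int (mC m) * t + real_of_int (mD m))"

lemma cf_matrix_snoc: "cf_matrix (ws @ [b]) = (cB ws, cA ws + int b * cB ws, cD ws, cC ws + int b * cD ws)"
proof -
  have "cf_matrix [b] = cf_gen b" by (simp add: cf_matrix_Cons)
  then show ?thesis by (intro mat_eqI') (simp_all add: cf_matrix_append mmul_comps cf_gen_def algebra_simps)
qed

lemma mob_snoc:
  assumes "pos ws" "b \<ge> 1" "t \<ge> 0"
  shows "mob (cf_matrix (ws @ [b])) t = mob (cf_matrix ws) (1 / (real b + t))"
proof -
  have n: "cA ws \<ge> 0" "cB ws \<ge> 0" "cC ws \<ge> 0" "cD ws \<ge> 1" using cf_nonneg[OF assms(1)] by auto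
  define a where "a = real_of_int (cA ws)"
  define bb where "bb = real_of_int (cB ws)"
  define c where "c = real_of_int (cC ws)"
  define d where "d = real_of_int (cD ws)"
  have pos: "a \<ge> 0" "bb \<ge> 0" "c \<ge> 0" "d \<ge> 1" using n unfolding a_def bb_def c_def d_def by simp_all
  have bt: "real b + t > 0" using assms by simp
  have "d * t \<ge> 0" using pos assms by simp
  moreover have "real b * d \<ge> 1 * 1" using pos assms by (intro mult_mono) auto
  ultimately have d1: "d * t + (c + real b * d) > 0" using pos by linarith
  have "c / (real b + t) \<ge> 0" using pos bt by simp
  then have d2: "c / (real b + t) + d > 0" using pos by linarith
  have "mob (cf_matrix (ws @ [b])) t = (bb * t + (a + real b * bb)) / (d * t + (c + real b * d))"
    unfolding mob_def cf_matrix_snoc a_def bb_def c_def d_def by simp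
  also have "\<dots> = (a + bb * (real b + t)) / (c + d * (real b + t))"
    by (simp add: algebra_simps)
  also have "\<dots> = (a * (1 / (real b + t)) + bb) / (c * (1 / (real b + t)) + d)"
  proof -
    have r1: "a * (1 / (real b + t)) + bb = (a + bb * (real b + t)) / (real b + t)"
      using bt by (simp add: field_simps)
    have r2: "c * (1 / (real b + t)) + d = (c + d * (real b + t)) / (real b + t)"
      using bt by (simp add: field_simps)
    show ?thesis unfolding r1 r2 using bt by simp
  qed
  also have "\<dots> = mob (cf_matrix ws) (1 / (real b + t))"
    unfolding mob_def a_def bb_def c_def d_def by simp
  finally show ?thesis .
qed

lemma gauss_step:
  assumes "0 < x" "x < 1" "x \<notin> \<rat>"
  shows "0 < gauss_map x \<and> gauss_map x < 1 \<and> gauss_map x \<notin> \<rat> \<and> \<lfloor>1/x\<rfloor> \<ge> 1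
     \<and> x = 1 / (real_of_int \<lfloor>1/x\<rfloor> + gauss_map x)"
proof -
  have g: "gauss_map x = 1/x - of_int \<lfloor>1/x\<rfloor>" unfolding gauss_map_def frac_def by simp
  have "1/x > 1" using assms by simp
  then have f1: "\<lfloor>1/x\<rfloor> \<ge> 1" by (simp add: le_floor_iff)
  have ninv: "1/x \<notin> \<rat>"
  proof
    assume "1/x \<in> \<rat>"
    then have "1 / (1/x) \<in> \<rat>" by (rule Rats_divide[OF Rats_1])
    then show False using assms by simp
  qed
  have nq: "gauss_map x \<notin> \<rat>"
  proof
    assume "gauss_map x \<in> \<rat>"
    then have "gauss_map x + of_int \<lfloor>1/x\<rfloor> \<in> \<rat>" by (simp add: Rats_add)
    then show False using ninv g by simp
  qed
  have "gauss_map x \<ge> 0" "gauss_map x < 1" unfolding gauss_map_def by (simp_all add: frac_lt_1)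
  moreover have "gauss_map x \<noteq> 0" using nq by auto
  moreover have "x = 1 / (real_of_int \<lfloor>1/x\<rfloor> + gauss_map x)" using g assms by simp
  ultimately show ?thesis using nq f1 by auto
qed

lemma gauss_iter:
  assumes "0 < x" "x < 1" "x \<notin> \<rat>"
  shows "0 < (gauss_map ^^ n) x \<and> (gauss_map ^^ n) x < 1 \<and> (gauss_map ^^ n) x \<notin> \<rat>"
  using assms gauss_step by (induction n) auto

definition bsq :: "real \<Rightarrow> nat \<Rightarrow> nat list" where
  "bsq x n = map (\<lambda>i. nat (partial_quotient x i)) [0..<n]"

lemma pq_ge1: "0 < x \<Longrightarrow> x < 1 \<Longrightarrow> x \<notin> \<rat> \<Longrightarrow> partial_quotient x i \<ge> 1"
  unfolding partial_quotient_def using gauss_iter gauss_step by blast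

lemma bsq_pos: "0 < x \<Longrightarrow> x < 1 \<Longrightarrow> x \<notin> \<rat> \<Longrightarrow> pos (bsq x n)"
  unfolding pos_def
proof
  fix b assume x: "0 < x" "x < 1" "x \<notin> \<rat>" and "b \<in> set (bsq x n)"
  then obtain i where "b = nat (partial_quotient x i)" unfolding bsq_def by auto
  then show "b \<ge> 1" using pq_ge1[OF x, of i] by simp
qed

lemma cf_repr:
  assumes "0 < x" "x < 1" "x \<notin> \<rat>"
  shows "x = mob (cf_matrix (bsq x n)) ((gauss_map ^^ n) x)"
proof (induction n)
  case 0 then show ?case by (simp add: bsq_def mob_def)
next
  case (Suc n)
  define y where "y = (gauss_map ^^ n) x"
  have y: "0 < y" "y < 1" "y \<notin> \<rat>" using gauss_iter[OF assms] y_def by auto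
  define b where "b = nat (partial_quotient x n)"
  have b1: "partial_quotient x n \<ge> 1" using pq_ge1[OF assms] by blast
  have "partial_quotient x n = \<lfloor>1/y\<rfloor>" unfolding partial_quotient_def y_def by simp
  then have bq: "real b = real_of_int \<lfloor>1/y\<rfloor>" unfolding b_def using b1
    by (metis of_nat_nat of_int_of_nat_eq order_trans zero_le_one)
  have st: "y = 1 / (real_of_int \<lfloor>1/y\<rfloor> + gauss_map y)" using gauss_step[OF y] by blast
  have bs: "bsq x (Suc n) = bsq x n @ [b]" unfolding bsq_def b_def by simp
  have gy: "(gauss_map ^^ Suc n) x = gauss_map y" unfolding y_def by simp
  have "mob (cf_matrix (bsq x (Suc n))) ((gauss_map ^^ Suc n) x) = mob (cf_matrix (bsq x n)) (1 / (real b + gauss_map y))"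
    unfolding bs gy using mob_snoc[OF bsq_pos[OF assms] _ , of b "gauss_map y"] b1 gauss_step[OF y] b_def by auto
  also have "\<dots> = mob (cf_matrix (bsq x n)) y" using st bq by simp
  also have "\<dots> = x" using Suc y_def by simp
  finally show ?case by simp
qed


definition Wn :: "nat \<Rightarrow> nat list set" where "Wn n = {ws. length ws = n \<and> set ws \<subseteq> {1,2}}"
definition cyl :: "nat list \<Rightarrow> real set" where "cyl ws = mob (cf_matrix ws) ` {0..1}"

lemma Wn_finite: "finite (Wn n)"
  unfolding Wn_def using finite_lists_length_eq[of "{1::nat,2}" n] by (simp add: conj_commute)

lemma Wn_pos: "ws \<in> Wn n \<Longrightarrow> pos ws"
  unfolding Wn_def pos_def by auto

lemma E_cover:
  assumes "x \<in> cf_bounded_set 2"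
  shows "\<exists>ws\<in>Wn n. x \<in> cyl ws"
proof -
  have x: "x \<in> {0..1}" "x \<notin> \<rat>" "\<forall>i. partial_quotient x i \<le> 2"
    using assms unfolding cf_bounded_set_def by auto
  have "x \<noteq> 0" "x \<noteq> 1" using x(2) by auto
  then have x01: "0 < x" "x < 1" using x(1) by auto
  have "bsq x n \<in> Wn n"
    unfolding Wn_def
  proof (intro CollectI conjI subsetI)
    show "length (bsq x n) = n" unfolding bsq_def by simp
    fix b assume "b \<in> set (bsq x n)"
    then obtain i where "b = nat (partial_quotient x i)" unfolding bsq_def by auto
    moreover have "partial_quotient x i = 1 \<or> partial_quotient x i = 2"
    proof -
      have "1 \<le> partial_quotient x i" "partial_quotient x i \<le> 2" using pq_ge1[OF x01 x(2), of i] x(3) by auto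
      then show ?thesis by presburger
    qed
    ultimately show "b \<in> {1,2}" by auto
  qed
  moreover have "x \<in> cyl (bsq x n)"
    unfolding cyl_def using cf_repr[OF x01 x(2), of n] gauss_iter[OF x01 x(2), of n]
    by (intro image_eqI[of _ _ "(gauss_map ^^ n) x"]) auto
  ultimately show ?thesis by blast
qed

lemma mob_diff:
  assumes "pos ws" "t \<in> {0..1}" "t' \<in> {0..1}"
  shows "\<bar>mob (cf_matrix ws) t - mob (cf_matrix ws) t'\<bar> \<le> 1 / (real_of_int (cD ws))^2"
proof -
  define a where "a = real_of_int (cA ws)"
  define b where "b = real_of_int (cB ws)"
  define c where "c = real_of_int (cC ws)"
  define d where "d = real_of_int (cD ws)"
  have pos: "a \<ge> 0" "b \<ge> 0" "c \<ge> 0" "d \<ge> 1" using cf_nonneg[OF assms(1)] unfolding a_def b_def c_def d_def by auto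
  have det: "\<bar>a * d - b * c\<bar> = 1"
  proof -
    have "a * d - b * c = real_of_int ((-1) ^ length ws)" using cf_det[of ws] unfolding a_def b_def c_def d_def
      by (metis of_int_diff of_int_mult)
    then show ?thesis by simp
  qed
  have t: "0 \<le> t" "t \<le> 1" "0 \<le> t'" "t' \<le> 1" using assms by auto
  have D1: "c * t + d \<ge> d" "c * t' + d \<ge> d" using pos t by simp_all
  have D2: "c * t + d > 0" "c * t' + d > 0" using D1 pos by linarith+
  have e: "mob (cf_matrix ws) t - mob (cf_matrix ws) t' = (a * d - b * c) * (t - t') / ((c * t + d) * (c * t' + d))"
    unfolding mob_def a_def[symmetric] b_def[symmetric] c_def[symmetric] d_def[symmetric]
    using D2 by (simp add: field_simps)
  have "\<bar>(a * d - b * c) * (t - t')\<bar> \<le> 1" using det t by (simp add: abs_mult)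
  moreover have "(c * t + d) * (c * t' + d) \<ge> d * d" using D1 pos by (intro mult_mono) auto
  ultimately have "\<bar>(a * d - b * c) * (t - t')\<bar> / ((c * t + d) * (c * t' + d)) \<le> 1 / (d * d)"
    using pos by (intro frac_le) auto
  then show ?thesis unfolding e d_def[symmetric] using D2 by (simp add: power2_eq_square abs_divide abs_mult)
qed

lemma cyl_diam:
  assumes "pos ws"
  shows "bounded (cyl ws) \<and> diameter (cyl ws) \<le> 1 / (real_of_int (cD ws))^2"
proof
  have "\<forall>x\<in>cyl ws. norm x \<le> \<bar>mob (cf_matrix ws) 0\<bar> + 1 / (real_of_int (cD ws))^2"
  proof
    fix x assume "x \<in> cyl ws"
    then obtain t where t: "t \<in> {0..1}" "x = mob (cf_matrix ws) t" unfolding cyl_def by auto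
    have "\<bar>x - mob (cf_matrix ws) 0\<bar> \<le> 1 / (real_of_int (cD ws))^2" using mob_diff[OF assms t(1), of 0] t by simp
    then show "norm x \<le> \<bar>mob (cf_matrix ws) 0\<bar> + 1 / (real_of_int (cD ws))^2" by simp
  qed
  then show "bounded (cyl ws)" unfolding bounded_iff by blast
  show "diameter (cyl ws) \<le> 1 / (real_of_int (cD ws))^2"
  proof (rule diameter_le)
    show "cyl ws \<noteq> {} \<or> 0 \<le> 1 / (real_of_int (cD ws))^2" by simp
    fix x y assume "x \<in> cyl ws" "y \<in> cyl ws"
    then obtain t t' where "t \<in> {0..1}" "x = mob (cf_matrix ws) t" "t' \<in> {0..1}" "y = mob (cf_matrix ws) t'"
      unfolding cyl_def by auto
    then show "norm (x - y) \<le> 1 / (real_of_int (cD ws))^2" using mob_diff[OF assms] by simp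
  qed
qed

lemma Wn_split: "Wn (2 + n) \<subseteq> (\<lambda>(u,v). u @ v) ` (Wn 2 \<times> Wn n)"
proof
  fix ws assume ws: "ws \<in> Wn (2 + n)"
  have "take 2 ws \<in> Wn 2" "drop 2 ws \<in> Wn n" using ws unfolding Wn_def
    by (auto dest: in_set_takeD in_set_dropD)
  moreover have "ws = take 2 ws @ drop 2 ws" by simp
  ultimately show "ws \<in> (\<lambda>(u,v). u @ v) ` (Wn 2 \<times> Wn n)" by (metis (no_types, lifting) SigmaI case_prod_conv image_eqI)
qed

lemma Wn2: "Wn 2 = {[1,1],[1,2],[2,1],[2,2]}"
proof
  show "Wn 2 \<subseteq> {[1,1],[1,2],[2,1],[2,2]}"
  proof
    fix ws assume "ws \<in> Wn 2"
    then obtain a b where ws: "ws = [a,b]" "a \<in> {1,2}" "b \<in> {1,2}" unfolding Wn_def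
      by (auto simp: length_Suc_conv numeral_2_eq_2)
    then show "ws \<in> {[1,1],[1,2],[2,1],[2,2]}" by auto
  qed
  show "{[1,1],[1,2],[2,1],[2,2]} \<subseteq> Wn 2" unfolding Wn_def by auto
qed

lemma cD_Wn: "ws \<in> Wn (2 * k) \<Longrightarrow> real_of_int (cD ws) \<ge> 2 ^ k"
proof (induction k arbitrary: ws)
  case 0 then show ?case unfolding Wn_def by simp
next
  case (Suc k)
  then have "ws \<in> Wn (2 + 2 * k)" by simp
  then have "ws \<in> (\<lambda>(u,v). u @ v) ` (Wn 2 \<times> Wn (2 * k))" using Wn_split[of "2 * k"] by blast
  then obtain u v where uv: "u \<in> Wn 2" "v \<in> Wn (2 * k)" "ws = u @ v" by auto
  have "cD u \<ge> 2" using uv(1) unfolding Wn2 by (auto simp: cf_matrix_Cons cf_gen_def)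
  moreover have "real_of_int (cD v) \<ge> 2 ^ k" using Suc.IH uv(2) by blast
  moreover have "cD ws \<ge> cD u * cD v" unfolding uv(3) by (rule cD_append_ge) (use uv Wn_pos in auto)
  ultimately have U: "real_of_int (cD u) \<ge> 2" "real_of_int (cD v) \<ge> 2 ^ k"
     "real_of_int (cD ws) \<ge> real_of_int (cD u) * real_of_int (cD v)"
    by (simp_all only: of_int_le_iff of_int_mult[symmetric])
  have "real_of_int (cD u) * real_of_int (cD v) \<ge> 2 * 2 ^ k" using U(1,2) by (intro mult_mono) auto
  then have "real_of_int (cD ws) \<ge> 2 * 2 ^ k" using U(3) by linarith
  then show ?case by simp
qed


definition gq :: "nat list \<Rightarrow> real" where "gq ws = (1 / (real_of_int (cD ws))^2) powr (3/4)"

lemma gq_nonneg: "gq ws \<ge> 0" unfolding gq_def by simp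

lemma gq_mult:
  assumes "pos u" "pos v"
  shows "gq (u @ v) \<le> gq u * gq v"
proof -
  define U where "U = real_of_int (cD u)"
  define V where "V = real_of_int (cD v)"
  define UV where "UV = real_of_int (cD (u @ v))"
  have U: "U \<ge> 1" "V \<ge> 1" unfolding U_def V_def using cf_nonneg assms by auto
  have "cD (u @ v) \<ge> cD u * cD v" using cD_append_ge[OF assms] .
  then have UV: "UV \<ge> U * V" unfolding UV_def U_def V_def by (simp only: of_int_le_iff of_int_mult[symmetric])
  have UV1: "U * V \<ge> 1" using U by (metis mult_mono' mult_1 order_trans zero_le_one)
  have "(U * V)^2 \<le> UV^2" using UV UV1 by (intro power_mono) auto
  moreover have "UV \<ge> 1" using UV UV1 by linarith
  then have "0 < UV^2 * (U * V)^2" using UV1 by (intro mult_pos_pos) auto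
  ultimately have "1 / UV^2 \<le> 1 / (U * V)^2" by (intro divide_left_mono) auto
  also have "\<dots> = (1 / U^2) * (1 / V^2)" by (simp add: power_mult_distrib)
  finally have le: "1 / UV^2 \<le> (1 / U^2) * (1 / V^2)" .
  have "gq (u @ v) = (1 / UV^2) powr (3/4)" unfolding gq_def UV_def ..
  also have "\<dots> \<le> ((1 / U^2) * (1 / V^2)) powr (3/4)" using le by (intro powr_mono2) auto
  also have "\<dots> = gq u * gq v" unfolding gq_def U_def[symmetric] V_def[symmetric]
    by (rule powr_mult)
  finally show ?thesis .
qed

lemma powr_bound:
  fixes x b :: real
  assumes "0 < x" "0 \<le> b" "x ^ 3 \<le> b ^ 4"
  shows "x powr (3/4) \<le> b"
proof -
  have "(x powr (3/4)) ^ 4 = x powr (of_nat 4 * (3/4))" using assms(1) by (simp add: powr_power)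
  also have "\<dots> = x ^ 3" using assms(1) by simp
  finally have "(x powr (3/4)) ^ Suc 3 \<le> b ^ Suc 3" using assms(3) by simp
  then show ?thesis using assms(2) by (rule power_le_imp_le_base)
qed

lemma cD_small: "cD [1,1] = 2" "cD [1,2] = 3" "cD [2,1] = 3" "cD [2,2] = 5"
  by (simp_all add: cf_matrix_Cons cf_gen_def)

lemma W2_sum: "(\<Sum>ws\<in>Wn 2. gq ws) \<le> 17/20"
proof -
  have a: "(1/4::real) powr (3/4) \<le> 9/25" by (rule powr_bound) (auto simp: power_divide)
  have b: "(1/9::real) powr (3/4) \<le> 1/5" by (rule powr_bound) (auto simp: power_divide)
  have c: "(1/25::real) powr (3/4) \<le> 9/100" by (rule powr_bound) (auto simp: power_divide)
  have "(\<Sum>ws\<in>Wn 2. gq ws) = gq [1,1] + gq [1,2] + gq [2,1] + gq [2,2]"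
    unfolding Wn2 by simp
  also have "\<dots> = (1/4) powr (3/4) + (1/9) powr (3/4) + (1/9) powr (3/4) + (1/25) powr (3/4)"
    unfolding gq_def cD_small by simp
  also have "\<dots> \<le> 17/20" using a b c by simp
  finally show ?thesis .
qed

lemma W_sum: "(\<Sum>ws\<in>Wn (2 * k). gq ws) \<le> (17/20) ^ k"
proof (induction k)
  case 0
  have "Wn 0 = {[]}" unfolding Wn_def by auto
  then show ?case by (simp add: gq_def)
next
  case (Suc k)
  define f where "f = (\<lambda>(u::nat list, v::nat list). u @ v)"
  have fin: "finite (Wn 2 \<times> Wn (2 * k))" using Wn_finite by simp
  have "(\<Sum>ws\<in>Wn (2 * Suc k). gq ws) \<le> (\<Sum>ws\<in>f ` (Wn 2 \<times> Wn (2 * k)). gq ws)"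
  proof (rule sum_mono2)
    show "finite (f ` (Wn 2 \<times> Wn (2 * k)))" using fin by simp
    show "Wn (2 * Suc k) \<subseteq> f ` (Wn 2 \<times> Wn (2 * k))" using Wn_split[of "2 * k"] unfolding f_def by simp
    show "\<And>b. b \<in> f ` (Wn 2 \<times> Wn (2 * k)) - Wn (2 * Suc k) \<Longrightarrow> 0 \<le> gq b" using gq_nonneg by blast
  qed
  also have "\<dots> \<le> (\<Sum>x\<in>Wn 2 \<times> Wn (2 * k). (gq \<circ> f) x)"
    using sum_image_le[OF fin, of gq f] gq_nonneg by blast
  also have "\<dots> \<le> (\<Sum>x\<in>Wn 2 \<times> Wn (2 * k). gq (fst x) * gq (snd x))"
  proof (rule sum_mono)
    fix x assume "x \<in> Wn 2 \<times> Wn (2 * k)"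
    then show "(gq \<circ> f) x \<le> gq (fst x) * gq (snd x)" unfolding f_def using gq_mult Wn_pos
      by (cases x) auto
  qed
  also have "\<dots> = (\<Sum>u\<in>Wn 2. gq u) * (\<Sum>v\<in>Wn (2 * k). gq v)"
    by (simp add: sum_product sum.cartesian_product case_prod_beta)
  also have "\<dots> \<le> (17/20) * (17/20) ^ k"
    using W2_sum Suc.IH by (intro mult_mono) (auto intro: sum_nonneg gq_nonneg)
  finally show ?case by simp
qed


lemma hd_cyl:
  assumes "pos ws"
  shows "hd_term (3/4) (cyl ws) \<le> gq ws" "hd_term (3/4) (cyl ws) \<ge> 0"
proof -
  have ne: "cyl ws \<noteq> {}" unfolding cyl_def by auto
  have "hd_term (3/4) (cyl ws) = diameter (cyl ws) powr (3/4)" unfolding hd_term_def using ne by simp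
  also have "\<dots> \<le> (1 / (real_of_int (cD ws))^2) powr (3/4)"
    using cyl_diam[OF assms] diameter_ge_0[of "cyl ws"] by (intro powr_mono2) auto
  finally show "hd_term (3/4) (cyl ws) \<le> gq ws" unfolding gq_def .
  show "hd_term (3/4) (cyl ws) \<ge> 0" unfolding hd_term_def by simp
qed

lemma pre_le:
  assumes d: "\<delta> > 0" and k: "(1/4) ^ k \<le> \<delta>"
  shows "hausdorff_pre (3/4) \<delta> (cf_bounded_set 2) \<le> ennreal ((17/20) ^ k)"
proof -
  define W where "W = Wn (2 * k)"
  have fW: "finite W" unfolding W_def by (rule Wn_finite)
  obtain h where h: "bij_betw h {0..<card W} W" using ex_bij_betw_nat_finite[OF fW] by blast
  define f where "f i = (if i < card W then cyl (h i) else {})" for i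
  have posW: "pos ws" if "ws \<in> W" for ws using that Wn_pos unfolding W_def by blast
  have diamW: "bounded (cyl ws) \<and> diameter (cyl ws) \<le> \<delta>" if "ws \<in> W" for ws
  proof -
    have "real_of_int (cD ws) \<ge> 2 ^ k" using cD_Wn that unfolding W_def by blast
    moreover have "(2::real) ^ k > 0" by simp
    ultimately have cpos: "real_of_int (cD ws) > 0" by linarith
    have "(real_of_int (cD ws))^2 \<ge> (2 ^ k)^2" using \<open>real_of_int (cD ws) \<ge> 2 ^ k\<close> by (intro power_mono) auto
    moreover have "0 < (real_of_int (cD ws))^2 * (2 ^ k)^2" using cpos by simp
    ultimately have "1 / (real_of_int (cD ws))^2 \<le> 1 / (2 ^ k)^2" by (intro divide_left_mono) auto
    also have "1 / (2 ^ k)^2 = (1/4::real) ^ k"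
    proof -
      have "((2::real) ^ k)^2 = (2^2) ^ k" by (metis power_mult mult.commute)
      then show ?thesis by (simp add: power_divide)
    qed
    finally show ?thesis using cyl_diam[OF posW[OF that]] k by linarith
  qed
  have inC: "f \<in> {f :: nat \<Rightarrow> real set. cf_bounded_set 2 \<subseteq> (\<Union>i. f i) \<and> (\<forall>i. bounded (f i) \<and> diameter (f i) \<le> \<delta>)}"
  proof (intro CollectI conjI allI subsetI)
    fix x assume "x \<in> cf_bounded_set 2"
    then obtain ws where ws: "ws \<in> W" "x \<in> cyl ws" using E_cover unfolding W_def by blast
    then obtain i where "i \<in> {0..<card W}" "h i = ws" using h by (metis bij_betw_iff_bijections)
    then show "x \<in> (\<Union>i. f i)" unfolding f_def using ws by auto
  next
    fix i
    have "i < card W \<Longrightarrow> h i \<in> W" using h unfolding bij_betw_def by auto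
    then show "bounded (f i)" "diameter (f i) \<le> \<delta>"
      using diamW d unfolding f_def by auto
  qed
  have "hausdorff_pre (3/4) \<delta> (cf_bounded_set 2) \<le> (\<Sum>i. ennreal (hd_term (3/4) (f i)))"
    unfolding hausdorff_pre_def by (rule INF_lower[OF inC])
  also have "(\<Sum>i. ennreal (hd_term (3/4) (f i))) = (\<Sum>i\<in>{0..<card W}. ennreal (hd_term (3/4) (f i)))"
    by (rule suminf_finite) (auto simp: f_def hd_term_def)
  also have "\<dots> = (\<Sum>i\<in>{0..<card W}. ennreal (hd_term (3/4) (cyl (h i))))"
    unfolding f_def by (intro sum.cong) auto
  also have "\<dots> = (\<Sum>ws\<in>W. ennreal (hd_term (3/4) (cyl ws)))"
    by (rule sum.reindex_bij_betw[OF h])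
  also have "\<dots> = ennreal (\<Sum>ws\<in>W. hd_term (3/4) (cyl ws))"
    using hd_cyl(2) posW by (intro sum_ennreal) auto
  also have "\<dots> \<le> ennreal (\<Sum>ws\<in>W. gq ws)"
    using hd_cyl(1) posW by (intro ennreal_leI sum_mono) auto
  also have "\<dots> \<le> ennreal ((17/20) ^ k)" unfolding W_def using W_sum by (intro ennreal_leI) auto
  finally show ?thesis .
qed

lemma pre_zero:
  assumes d: "\<delta> > 0"
  shows "hausdorff_pre (3/4) \<delta> (cf_bounded_set 2) = 0"
proof -
  have "hausdorff_pre (3/4) \<delta> (cf_bounded_set 2) \<le> 0"
  proof (rule ennreal_le_epsilon)
    fix e :: real assume e: "0 < e"
    obtain k1 where k1: "(17/20::real) ^ k1 < e" using real_arch_pow_inv[OF e, of "17/20"] by auto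
    obtain k2 where k2: "(1/4::real) ^ k2 < \<delta>" using real_arch_pow_inv[OF d, of "1/4"] by auto
    have "(1/4::real) ^ (k1 + k2) \<le> (1/4) ^ k2" by (rule power_decreasing) auto
    then have a: "(1/4::real) ^ (k1 + k2) \<le> \<delta>" using k2 by linarith
    have "(17/20::real) ^ (k1 + k2) \<le> (17/20) ^ k1" by (rule power_decreasing) auto
    then have b: "(17/20::real) ^ (k1 + k2) \<le> e" using k1 by linarith
    have "hausdorff_pre (3/4) \<delta> (cf_bounded_set 2) \<le> ennreal ((17/20) ^ (k1 + k2))"
      by (rule pre_le[OF d a])
    also have "\<dots> \<le> ennreal e" using b by (rule ennreal_leI)
    finally show "hausdorff_pre (3/4) \<delta> (cf_bounded_set 2) \<le> 0 + ennreal e" by simp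
  qed
  then show ?thesis by simp
qed

lemma w2_le: "w 2 \<le> 3/4"
proof -
  have "hausdorff_measure (3/4) (cf_bounded_set 2) = 0"
    unfolding hausdorff_measure_def using pre_zero by simp
  then have mem: "3/4 \<in> {s. s \<ge> 0 \<and> hausdorff_measure s (cf_bounded_set 2) = 0}" by simp
  have bdd: "bdd_below {s. s \<ge> 0 \<and> hausdorff_measure s (cf_bounded_set 2) = 0}"
    by (rule bdd_belowI[of _ 0]) auto
  show ?thesis unfolding w_def hausdorff_dim_def using cInf_lower[OF mem bdd] .
qed


theorem corollary17:
  fixes M :: nat
  assumes "M \<ge> 2"
    and "w M > 3/4"
  shows "\<exists>c>0. \<forall>p::nat. prime p \<longrightarrow>
           real (card (prod3 p (cfA M p) (borel p) (cfA M p))) \<ge> c * real p ^ 3 \<and>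
           real (card (prod3 p (inv_set p (cfA M p)) (borel p) (inv_set p (cfA M p))))
              \<ge> c * real p ^ 3"
proof -
  have "M \<noteq> 2" using w2_le assms(2) by auto
  then have "M \<ge> 3" using assms(1) by simp
  then show ?thesis by (rule final_M3)
qed

end
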